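(* Let $\mathbf a=(a_0,\dots,a_n)$ with $-1\le a_0<a_1<\dots<a_n\le1$ and $a_{i+1}-a_i>2b$. Then the sets $U^{\mathbf a}_{n,0},U^{\mathbf a}_{n-1,1},\dots,U^{\mathbf a}_{0,n}$ form an open cover of $\mathrm{Sym}^n\mathbb R$. Similarly, the smoothed sets $U^{\mathbf a,\delta}_{n,0},\dots,U^{\mathbf a,\delta}_{0,n}$ form an open cover of $\mathrm{Sym}^n\mathbb R$ for $0<\delta\ll b$.
   Context: Fix $b>0$. For $\mathbf z\in\mathrm{Sym}^m\mathbb R$ nonempty, $c(\mathbf z)$ is the average of its points and its box is $B_{\mathbf z}=[c(\mathbf z)-|\mathbf z|b,\,c(\mathbf z)+|\mathbf z|b]$. $\mathbf z$ is well contained in $B_{\mathbf z}$ if $B_{\mathbf z'}\subset B_{\mathbf z}$ for every consecutive subset $\mathbf z'=\{x_p,\dots,x_q\}$ of $\mathbf z=(x_1\le\dots\le x_m)$. The box decomposition of $\mathbf z$ is the unique decomposition $\mathbf z=\mathbf z_1+\dots+\mathbf z_r$ into parts well contained in their boxes with the boxes $B_{\mathbf z_i}$ pairwise disjoint and ordered. $U^{\mathbf a}_{i,n-i}\subset\mathrm{Sym}^n\mathbb R$ is the set of $\mathbf z$ such that $a_i$ lies in the complement of the union of the boxes of the box decomposition of $\mathbf z$ and exactly $i$ points of $\mathbf z$ lie to the left of $a_i$. For the smoothed version, write $\mathbf x=(x_1\le\dots\le x_n)$, $x_{[p,q]}$ for the average of $x_p,\dots,x_q$, and $\rho^{\mathbf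 a,\delta}_{k,n-k}=M_\delta\big(\{x_{[k-i,k]}+(i+1)b-a_k\}_{i=0}^{k-1},\{a_k-x_{[k+1,k+1+i]}+(i+1)b\}_{i=0}^{n-k-1}\big)$, $U^{\mathbf a,\delta}_{k,n-k}=\{\rho^{\mathbf a,\delta}_{k,n-k}<0\}$, where $M_\delta$ is the regularized maximum $M_\delta(t_1,\dots,t_p)=\int_{\mathbb R^p}\max_j\{t_j+h_j\}\prod_j\theta(h_j/\delta)\delta^{-1}dh_j$ for a fixed smooth nonnegative $\theta$ supported in $[-1,1]$ with $\int\theta=1$ and $\int h\theta(h)dh=0$. *)

theory Defs
  imports "HOL-Analysis.Analysis" "HOL-Library.Multiset"
begin

text \<open>Points of Sym^n R are represented as real multisets of size n.\<close>

text \<open>Quotient topology on Sym^n R: U is open iff its preimage under the quotient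
  map R^n \<rightarrow> Sym^n R is open. R^n is the subspace of nat \<Rightarrow> real (product topology)
  of functions vanishing at indices \<ge> n.\<close>
definition sym_open :: "nat \<Rightarrow> real multiset set \<Rightarrow> bool" where
  "sym_open n U \<longleftrightarrow> U \<subseteq> {z. size z = n} \<and>
     openin (top_of_set {x :: nat \<Rightarrow> real. \<forall>i\<ge>n. x i = 0})
       {x. (\<forall>i\<ge>n. x i = 0) \<and> mset (map x [0..<n]) \<in> U}"

definition ctr :: "real multiset \<Rightarrow> real" where
  "ctr z = sum_mset z / real (size z)"

definition box :: "real \<Rightarrow> real multiset \<Rightarrow> real set" where
  "box b z = {ctr z - real (size z) * b .. ctr z + real (size z) * b}"

text \<open>consecutive subsets {x_p,...,x_q} of the sorted points (0-based indices)\<close>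
definition well_contained :: "real \<Rightarrow> real multiset \<Rightarrow> bool" where
  "well_contained b z \<longleftrightarrow>
     (\<forall>p q. p \<le> q \<and> q < size z \<longrightarrow>
        box b (mset (take (Suc q - p) (drop p (sorted_list_of_multiset z)))) \<subseteq> box b z)"

definition is_box_decomp :: "real \<Rightarrow> real multiset \<Rightarrow> real multiset list \<Rightarrow> bool" where
  "is_box_decomp b z zs \<longleftrightarrow> sum_list zs = z \<and>
     (\<forall>w\<in>set zs. w \<noteq> {#} \<and> well_contained b w) \<and>
     (\<forall>i j. i < j \<and> j < length zs \<longrightarrow> (\<forall>u\<in>box b (zs!i). \<forall>v\<in>box b (zs!j). u < v))"

definition box_decomp :: "real \<Rightarrow> real multiset \<Rightarrow> real multiset list" where
  "box_decomp b z = (THE zs. is_box_decomp b z zs)"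

text \<open>U^a_{i,n-i}\<close>
definition U_set :: "real \<Rightarrow> (nat \<Rightarrow> real) \<Rightarrow> nat \<Rightarrow> nat \<Rightarrow> real multiset set" where
  "U_set b a n i = {z. size z = n \<and>
     a i \<notin> (\<Union>w\<in>set (box_decomp b z). box b w) \<and>
     size (filter_mset (\<lambda>x. x < a i) z) = i}"

definition smooth_bump :: "(real \<Rightarrow> real) \<Rightarrow> bool" where
  "smooth_bump \<theta> \<longleftrightarrow> (\<forall>k x. ((deriv ^^ k) \<theta>) differentiable (at x)) \<and>
     (\<forall>h. 0 \<le> \<theta> h) \<and> (\<forall>h. \<bar>h\<bar> > 1 \<longrightarrow> \<theta> h = 0) \<and>
     (\<theta> has_integral 1) UNIV \<and> ((\<lambda>h. h * \<theta> h) has_integral 0) UNIV"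

definition reg_max :: "(real \<Rightarrow> real) \<Rightarrow> real \<Rightarrow> real list \<Rightarrow> real" where
  "reg_max \<theta> \<delta> ts = integral\<^sup>L (PiM {..<length ts} (\<lambda>_. lborel))
     (\<lambda>h. Max ((\<lambda>j. ts!j + h j) ` {..<length ts}) * (\<Prod>j<length ts. \<theta> (h j / \<delta>) / \<delta>))"

text \<open>x_[p,q] for the sorted list xs with 1-based indices\<close>
definition avg :: "real list \<Rightarrow> nat \<Rightarrow> nat \<Rightarrow> real" where
  "avg xs p q = (\<Sum>j=p..q. xs ! (j - 1)) / real (q - p + 1)"

definition rho :: "(real \<Rightarrow> real) \<Rightarrow> real \<Rightarrow> real \<Rightarrow> (nat \<Rightarrow> real) \<Rightarrow> nat \<Rightarrow> nat
    \<Rightarrow> real multiset \<Rightarrow> real" where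
  "rho \<theta> \<delta> b a n k z = (let xs = sorted_list_of_multiset z in
     reg_max \<theta> \<delta>
       ([avg xs (k - i) k + real (i + 1) * b - a k. i \<leftarrow> [0..<k]] @
        [a k - avg xs (k + 1) (k + 1 + i) + real (i + 1) * b. i \<leftarrow> [0..<n - k]]))"

text \<open>U^{a,delta}_{k,n-k}\<close>
definition U_smooth :: "(real \<Rightarrow> real) \<Rightarrow> real \<Rightarrow> real \<Rightarrow> (nat \<Rightarrow> real) \<Rightarrow> nat \<Rightarrow> nat
    \<Rightarrow> real multiset set" where
  "U_smooth \<theta> \<delta> b a n k = {z. size z = n \<and> rho \<theta> \<delta> b a n k z < 0}"

end

theory Submission
  imports Defs
begin


definition cen :: "real list \<Rightarrow> real" where "cen ys = sum_list ys / real (length ys)"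
definition lo :: "real \<Rightarrow> real list \<Rightarrow> real" where "lo b ys = cen ys - real (length ys) * b"
definition hi :: "real \<Rightarrow> real list \<Rightarrow> real" where "hi b ys = cen ys + real (length ys) * b"

lemma cen_app: assumes "X \<noteq> []" "Y \<noteq> []"
  shows "cen (X@Y) = (real (length X) * cen X + real (length Y) * cen Y) / real (length X + length Y)"
  using assms by (simp add: cen_def)

lemma alg1: fixes x y cx cy b :: real assumes "x > 0" "y > 0"
  shows "((x*cx+y*cy)/(x+y) + (x+y)*b) - (cy + y*b) = x/(x+y) * ((cx + x*b) - (cy - y*b))"
proof - have h: "x + y \<noteq> 0" using assms by linarith
  show ?thesis using h by (simp add: field_simps)
qed
lemma alg2: fixes x y cx cy b :: real assumes "x > 0" "y > 0"
  shows "((x*cx+y*cy)/(x+y) - (x+y)*b) - (cx - x*b) = y/(x+y) * ((cy - y*b) - (cx + x*b))"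
proof - have h: "x + y \<noteq> 0" using assms by linarith
  show ?thesis using h by (simp add: field_simps)
qed
lemma alg3: fixes x y cx cy b :: real assumes "x > 0" "y > 0"
  shows "((x*cx+y*cy)/(x+y) + (x+y)*b) - (cx + x*b) = y/(x+y) * (cy - cx + (x+y)*b)"
proof - have h: "x + y \<noteq> 0" using assms by linarith
  show ?thesis using h by (simp add: field_simps)
qed
lemma alg4: fixes x y cx cy b :: real assumes "x > 0" "y > 0"
  shows "((x*cx+y*cy)/(x+y) - (x+y)*b) - (cy - y*b) = x/(x+y) * (cx - cy - (x+y)*b)"
proof - have h: "x + y \<noteq> 0" using assms by linarith
  show ?thesis using h by (simp add: field_simps)
qed

lemma hi_app_hiY:
  assumes "X \<noteq> []" "Y \<noteq> []"
  shows "hi b (X@Y) - hi b Y = real (length X) / real (length X + length Y) * (hi b X - lo b Y)"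
  using alg1[of "real (length X)" "real (length Y)" "cen X" "cen Y" b] assms
  unfolding hi_def lo_def cen_app[OF assms] by simp

lemma lo_app_loX:
  assumes "X \<noteq> []" "Y \<noteq> []"
  shows "lo b (X@Y) - lo b X = real (length Y) / real (length X + length Y) * (lo b Y - hi b X)"
  using alg2[of "real (length X)" "real (length Y)" "cen X" "cen Y" b] assms
  unfolding hi_def lo_def cen_app[OF assms] by simp

lemma hi_app_hiX:
  assumes "X \<noteq> []" "Y \<noteq> []"
  shows "hi b (X@Y) - hi b X = real (length Y) / real (length X + length Y) * (cen Y - cen X + real (length X + length Y) * b)"
  using alg3[of "real (length X)" "real (length Y)" "cen X" "cen Y" b] assms
  unfolding hi_def lo_def cen_app[OF assms] by simp

lemma lo_app_loY:
  assumes "X \<noteq> []" "Y \<noteq> []"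
  shows "lo b (X@Y) - lo b Y = real (length X) / real (length X + length Y) * (cen X - cen Y - real (length X + length Y) * b)"
  using alg4[of "real (length X)" "real (length Y)" "cen X" "cen Y" b] assms
  unfolding hi_def lo_def cen_app[OF assms] by simp


lemma frac_pos: "X \<noteq> [] \<Longrightarrow> real (length X) / real (length X + length Y) > 0"
  by (cases X) (auto intro!: divide_pos_pos)

lemma frac_pos2: "Y \<noteq> [] \<Longrightarrow> real (length Y) / real (length X + length Y) > 0"
  by (cases Y) (auto intro!: divide_pos_pos)
lemma sgn_le: "(D::real) = f * d \<Longrightarrow> 0 < f \<Longrightarrow> (D \<le> 0) = (d \<le> 0)"
  by (simp add: mult_le_0_iff)
lemma sgn_lt: "(D::real) = f * d \<Longrightarrow> 0 < f \<Longrightarrow> (D < 0) = (d < 0)"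
  by (simp add: mult_less_0_iff)
lemma sgn_ge: "(D::real) = f * d \<Longrightarrow> 0 < f \<Longrightarrow> (0 \<le> D) = (0 \<le> d)"
  by (simp add: zero_le_mult_iff)
lemma sgn_gt: "(D::real) = f * d \<Longrightarrow> 0 < f \<Longrightarrow> (0 < D) = (0 < d)"
  by (simp add: zero_less_mult_iff)

lemma hiY_le: "X \<noteq> [] \<Longrightarrow> Y \<noteq> [] \<Longrightarrow> hi b X \<le> lo b Y \<Longrightarrow> hi b (X@Y) \<le> hi b Y"
  using sgn_le[OF hi_app_hiY[of X Y b] frac_pos[of X Y]] by simp
lemma hiY_ge: "X \<noteq> [] \<Longrightarrow> Y \<noteq> [] \<Longrightarrow> lo b Y \<le> hi b X \<Longrightarrow> hi b Y \<le> hi b (X@Y)"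
  using sgn_ge[OF hi_app_hiY[of X Y b] frac_pos[of X Y]] by simp
lemma hiY_ge_rev: "X \<noteq> [] \<Longrightarrow> Y \<noteq> [] \<Longrightarrow> hi b Y \<le> hi b (X@Y) \<Longrightarrow> lo b Y \<le> hi b X"
  using sgn_ge[OF hi_app_hiY[of X Y b] frac_pos[of X Y]] by simp
lemma loX_ge: "X \<noteq> [] \<Longrightarrow> Y \<noteq> [] \<Longrightarrow> hi b X \<le> lo b Y \<Longrightarrow> lo b X \<le> lo b (X@Y)"
  using sgn_ge[OF lo_app_loX[of X Y b] frac_pos2[of Y X]] by simp
lemma loX_gt: "X \<noteq> [] \<Longrightarrow> Y \<noteq> [] \<Longrightarrow> hi b X < lo b Y \<Longrightarrow> lo b X < lo b (X@Y)"
  using sgn_gt[OF lo_app_loX[of X Y b] frac_pos2[of Y X]] by simp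
lemma loX_le: "X \<noteq> [] \<Longrightarrow> Y \<noteq> [] \<Longrightarrow> lo b Y \<le> hi b X \<Longrightarrow> lo b (X@Y) \<le> lo b X"
  using sgn_le[OF lo_app_loX[of X Y b] frac_pos2[of Y X]] by simp
lemma loX_le_rev: "X \<noteq> [] \<Longrightarrow> Y \<noteq> [] \<Longrightarrow> lo b (X@Y) \<le> lo b X \<Longrightarrow> lo b Y \<le> hi b X"
  using sgn_le[OF lo_app_loX[of X Y b] frac_pos2[of Y X]] by simp
lemma hiX_ge: "X \<noteq> [] \<Longrightarrow> Y \<noteq> [] \<Longrightarrow> cen X \<le> cen Y \<Longrightarrow> b \<ge> 0 \<Longrightarrow> hi b X \<le> hi b (X@Y)"
  using sgn_ge[OF hi_app_hiX[of X Y b] frac_pos2[of Y X]] by (simp add: add_increasing2)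
lemma loY_le: "X \<noteq> [] \<Longrightarrow> Y \<noteq> [] \<Longrightarrow> cen X \<le> cen Y \<Longrightarrow> b \<ge> 0 \<Longrightarrow> lo b (X@Y) \<le> lo b Y"
  proof -
  assume a: "X \<noteq> []" "Y \<noteq> []" "cen X \<le> cen Y" "b \<ge> 0"
  have "0 \<le> real (length X + length Y) * b" using a by simp
  hence h: "cen X - cen Y - real (length X + length Y) * b \<le> 0" using a by linarith
  show ?thesis using sgn_le[OF lo_app_loY[of X Y b] frac_pos[of X Y]] h a by simp
qed

lemma cen_le: assumes "X \<noteq> []" "\<forall>x\<in>set X. x \<le> t" shows "cen X \<le> t"
proof -
  have "sum_list X \<le> real (length X) * t" using assms(2)
    by (induction X) (auto simp: algebra_simps)
  thus ?thesis using assms(1) by (simp add: cen_def field_simps)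
qed
lemma cen_ge: assumes "X \<noteq> []" "\<forall>x\<in>set X. t \<le> x" shows "t \<le> cen X"
proof -
  have "real (length X) * t \<le> sum_list X" using assms(2)
    by (induction X) (auto simp: algebra_simps)
  thus ?thesis using assms(1) by (simp add: cen_def field_simps)
qed
lemma cen_sorted: assumes "sorted (X@Y)" "X \<noteq> []" "Y \<noteq> []" shows "cen X \<le> cen Y"
proof -
  have "\<forall>x\<in>set X. x \<le> hd Y" using assms by (auto simp: sorted_append)
  hence "cen X \<le> hd Y" using cen_le assms by blast
  moreover have "\<forall>y\<in>set Y. hd Y \<le> y" using assms
    by (cases Y) (auto simp: sorted_append)
  hence "hd Y \<le> cen Y" using cen_ge assms by blast
  ultimately show ?thesis by linarith
qed

lemma rawSP: fixes p q r u v w b :: real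
  assumes "p > 0" "q > 0" "r > 0" "v - u \<le> (p+q)*b" "w - (p*u+q * v)/(p+q) \<le> (p+q+r)*b"
  shows "(q * v+r*w)/(q+r) - u \<le> (p+q+r)*b"
proof -
  define d1 where "d1 = v - u"
  define d2 where "d2 = w - u"
  have e1: "(p*u+q * v)/(p+q) = u + q*d1/(p+q)" using assms(1,2) unfolding d1_def
    by (simp add: field_simps)
  have i2: "d2 \<le> q*d1/(p+q) + (p+q+r)*b" using assms(5) unfolding e1 d2_def by linarith
  have "r*d2 \<le> r*(q*d1/(p+q)) + r*((p+q+r)*b)" using i2 assms(3)
    by (metis distrib_left mult_left_mono less_imp_le)
  moreover have "q*d1 + r*(q*d1/(p+q)) = (q*(p+q+r)/(p+q)) * d1" using assms(1,2)
    by (simp add: field_simps)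
  moreover have "(q*(p+q+r)/(p+q)) * d1 \<le> (q*(p+q+r)/(p+q)) * ((p+q)*b)"
    using assms d1_def by (intro mult_left_mono) auto
  moreover have "(q*(p+q+r)/(p+q)) * ((p+q)*b) = q*(p+q+r)*b" using assms(1,2) by simp
  ultimately have "q*d1 + r*d2 \<le> (q+r)*((p+q+r)*b)" by (simp add: algebra_simps)
  hence "(q*d1 + r*d2)/(q+r) \<le> (p+q+r)*b" using assms(2,3)
    by (simp add: divide_le_eq mult.commute)
  moreover have "(q * v+r*w)/(q+r) - u = (q*d1 + r*d2)/(q+r)" using assms(2,3) unfolding d1_def d2_def
    by (simp add: field_simps)
  ultimately show ?thesis by simp
qed


lemma SP_list: assumes "X \<noteq> []" "Y \<noteq> []" "Z \<noteq> []" "b \<ge> 0"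
  "lo b Y \<le> hi b X" "lo b Z \<le> hi b (X@Y)" shows "lo b (Y@Z) \<le> hi b X"
proof -
  define p where "p = real (length X)"
  define q where "q = real (length Y)"
  define r where "r = real (length Z)"
  have pos: "p > 0" "q > 0" "r > 0" using assms unfolding p_def q_def r_def by auto
  have c1: "cen Y - cen X \<le> (p+q)*b" using assms(5) unfolding lo_def hi_def p_def q_def by (simp add: algebra_simps)
  have c2: "cen Z - (p*cen X + q*cen Y)/(p+q) \<le> (p+q+r)*b" using assms(6) assms(1,2)
    unfolding lo_def hi_def p_def q_def r_def cen_app[OF assms(1,2)] by (simp add: algebra_simps)
  have "(q*cen Y + r*cen Z)/(q+r) - cen X \<le> (p+q+r)*b" by (rule rawSP[OF pos c1 c2])
  thus ?thesis using assms(2,3) unfolding lo_def hi_def cen_app[OF assms(2,3)] p_def q_def r_def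
    by (simp add: algebra_simps)
qed

lemma SP_list2: assumes "X \<noteq> []" "Y \<noteq> []" "Z \<noteq> []" "b \<ge> 0"
  "lo b Z \<le> hi b Y" "lo b (Y@Z) \<le> hi b X" shows "lo b Z \<le> hi b (X@Y)"
proof -
  define p where "p = real (length Z)"
  define q where "q = real (length Y)"
  define r where "r = real (length X)"
  have pos: "p > 0" "q > 0" "r > 0" using assms unfolding p_def q_def r_def by auto
  have c1: "(- cen Y) - (- cen Z) \<le> (p+q)*b" using assms(5) unfolding lo_def hi_def p_def q_def by (simp add: algebra_simps)
  have e2: "(p*(- cen Z) + q*(- cen Y))/(p+q) = - cen (Y@Z)" using pos
    unfolding cen_app[OF assms(2,3)] p_def q_def by (simp add: add.commute minus_divide_left)
  have c2: "(- cen X) - (p*(- cen Z) + q*(- cen Y))/(p+q) \<le> (p+q+r)*b" unfolding e2 using assms(6)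
    unfolding lo_def hi_def p_def q_def r_def by (simp add: algebra_simps)
  have g: "(q*(- cen Y) + r*(- cen X))/(q+r) - (- cen Z) \<le> (p+q+r)*b" by (rule rawSP[OF pos c1 c2])
  have e3: "(q*(- cen Y) + r*(- cen X))/(q+r) = - cen (X@Y)" using pos
    unfolding cen_app[OF assms(1,2)] q_def r_def by (simp add: add.commute minus_divide_left)
  have g2: "cen Z - cen (X@Y) \<le> (p+q+r)*b" using g unfolding e3 by simp
  show ?thesis using g2 unfolding lo_def hi_def p_def q_def r_def
    by (simp add: algebra_simps)
qed

definition wc :: "real \<Rightarrow> real list \<Rightarrow> bool" where
  "wc b ys \<longleftrightarrow> (\<forall>i j. i < j \<and> j \<le> length ys \<longrightarrow>
      lo b ys \<le> lo b (drop i (take j ys)) \<and> hi b (drop i (take j ys)) \<le> hi b ys)"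

lemma wc_sub: "wc b ys \<Longrightarrow> i < j \<Longrightarrow> j \<le> length ys \<Longrightarrow>
   lo b ys \<le> lo b (drop i (take j ys)) \<and> hi b (drop i (take j ys)) \<le> hi b ys"
  unfolding wc_def by blast

lemma wc_single: "b \<ge> 0 \<Longrightarrow> wc b [x]"
  unfolding wc_def
proof (intro allI impI)
  fix i j assume "b \<ge> 0" "i < j \<and> j \<le> length [x]"
  hence "i = 0" "j = 1" by auto
  thus "lo b [x] \<le> lo b (drop i (take j [x])) \<and> hi b (drop i (take j [x])) \<le> hi b [x]" by simp
qed

lemma merge_wc: assumes b: "b \<ge> 0" and s: "sorted (A@B)" and ne: "A \<noteq> []" "B \<noteq> []"
  and wA: "wc b A" and wB: "wc b B" and int: "lo b B \<le> hi b A" shows "wc b (A@B)"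
  unfolding wc_def
proof (intro allI impI)
  fix i j assume ij: "i < j \<and> j \<le> length (A@B)"
  define T where "T = drop i (take j (A@B))"
  have cAB: "cen A \<le> cen B" using cen_sorted s ne by blast
  have g1: "lo b (A@B) \<le> lo b A" using loX_le ne int by blast
  have g2: "hi b A \<le> hi b (A@B)" using hiX_ge ne cAB b by blast
  have g3: "lo b (A@B) \<le> lo b B" using loY_le ne cAB b by blast
  have g4: "hi b B \<le> hi b (A@B)" using hiY_ge ne int by blast
  show "lo b (A @ B) \<le> lo b T \<and> hi b T \<le> hi b (A @ B)"
  proof (cases "j \<le> length A")
    case True
    hence "T = drop i (take j A)" unfolding T_def by simp
    then show ?thesis using wA ij True g1 g2 unfolding wc_def by fastforce
  next
    case jA: False
    show ?thesis
    proof (cases "length A \<le> i")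
      case True
      hence "T = drop (i - length A) (take (j - length A) B)" unfolding T_def using jA by simp
      moreover have "i - length A < j - length A" "j - length A \<le> length B" using ij True jA by auto
      ultimately show ?thesis using wB g3 g4 unfolding wc_def by fastforce
    next
      case iA: False
      define A1 where "A1 = take i A"
      define A2 where "A2 = drop i A"
      define B1 where "B1 = take (j - length A) B"
      define B2 where "B2 = drop (j - length A) B"
      have A12: "A = A1 @ A2" and B12: "B = B1 @ B2" unfolding A1_def A2_def B1_def B2_def by simp_all
      have A2ne: "A2 \<noteq> []" and B1ne: "B1 \<noteq> []" unfolding A2_def B1_def using iA jA ne by auto
      have TT: "T = A2 @ B1" unfolding T_def A2_def B1_def using iA jA by simp
      have hi1: "hi b T \<le> hi b (A2 @ B)"
      proof (cases "B2 = []")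
        case True then show ?thesis using TT B12 by simp
      next
        case False
        have "sorted (T @ B2)" using s TT A12 B12
          by (metis append.assoc sorted_append)
        hence "cen T \<le> cen B2" using cen_sorted False TT A2ne by blast
        hence "hi b T \<le> hi b (T @ B2)" using hiX_ge False TT A2ne b by blast
        thus ?thesis using TT B12 by simp
      qed
      have hi2: "hi b (A2 @ B) \<le> hi b (A @ B)"
      proof (cases "A1 = []")
        case True then show ?thesis using A12 by simp
      next
        case False
        have "hi b (drop i (take (length A) A)) \<le> hi b A" using wA iA unfolding wc_def by (meson le_refl not_le)
        hence "hi b A2 \<le> hi b (A1 @ A2)" using A12 unfolding A2_def by simp
        hence "lo b A2 \<le> hi b A1" using hiY_ge_rev False A2ne by blast
        hence "lo b (A2 @ B) \<le> hi b A1" using SP_list[OF False A2ne ne(2) b] int A12 by simp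
        hence "hi b (A2 @ B) \<le> hi b (A1 @ (A2 @ B))" using hiY_ge False A2ne by blast
        thus ?thesis using A12 by simp
      qed
      have lo1: "lo b (A @ B1) \<le> lo b T"
      proof (cases "A1 = []")
        case True then show ?thesis using A12 TT by simp
      next
        case False
        have "sorted (A1 @ T)" using s TT A12 B12
          by (metis append.assoc sorted_append)
        hence "cen A1 \<le> cen T" using cen_sorted False TT A2ne by blast
        hence "lo b (A1 @ T) \<le> lo b T" using loY_le False TT A2ne b by blast
        thus ?thesis using TT A12 by simp
      qed
      have lo2: "lo b (A @ B) \<le> lo b (A @ B1)"
      proof (cases "B2 = []")
        case True then show ?thesis using B12 by simp
      next
        case False
        have "lo b B \<le> lo b (drop 0 (take (j - length A) B))" using wc_sub[OF wB, of 0 "j - length A"] jA ij by (simp add: le_diff_conv)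
        hence "lo b (B1 @ B2) \<le> lo b B1" using B12 unfolding B1_def by simp
        hence "lo b B2 \<le> hi b B1" using loX_le_rev False B1ne by blast
        hence "lo b B2 \<le> hi b (A @ B1)" using SP_list2[OF ne(1) B1ne False b] int B12 by simp
        hence "lo b ((A @ B1) @ B2) \<le> lo b (A @ B1)" using loX_le False B1ne by blast
        thus ?thesis using B12 by simp
      qed
      show ?thesis using hi1 hi2 lo1 lo2 by linarith
    qed
  qed
qed


definition pd :: "real \<Rightarrow> real list list \<Rightarrow> bool" where
  "pd b yss \<longleftrightarrow> (\<forall>Y\<in>set yss. Y \<noteq> [] \<and> wc b Y) \<and> sorted_wrt (\<lambda>P Q. hi b P < lo b Q) yss"

lemma lo_le_hi: "b \<ge> 0 \<Longrightarrow> lo b Y \<le> hi b Y"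
  unfolding lo_def hi_def by simp

lemma pd_Cons: "pd b (P # R) \<longleftrightarrow> P \<noteq> [] \<and> wc b P \<and> (\<forall>Q\<in>set R. hi b P < lo b Q) \<and> pd b R"
  unfolding pd_def by auto

lemma pd_append: "pd b (R @ S) \<longleftrightarrow> pd b R \<and> pd b S \<and> (\<forall>P\<in>set R. \<forall>Q\<in>set S. hi b P < lo b Q)"
  unfolding pd_def by (auto simp: sorted_wrt_append)

lemma ex_pd_aux:
  assumes "b \<ge> 0" "sorted (concat yss @ Q)" "pd b yss" "Q \<noteq> []" "wc b Q"
  shows "\<exists>zss. concat zss = concat yss @ Q \<and> pd b zss"
  using assms(2-5)
proof (induction yss arbitrary: Q rule: rev_induct)
  case Nil
  then show ?case by (intro exI[of _ "[Q]"]) (simp add: pd_def)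
next
  case (snoc P yss)
  have pdy: "pd b yss" and Pne: "P \<noteq> []" and wP: "wc b P" and ord: "\<forall>Y\<in>set yss. hi b Y < lo b P"
    using snoc.prems(2) unfolding pd_append by (auto simp: pd_Cons)
  show ?case
  proof (cases "hi b P < lo b Q")
    case True
    have "\<forall>Y\<in>set (yss @ [P]). hi b Y < lo b Q"
      using ord True lo_le_hi[OF assms(1), of P] by fastforce
    moreover have "pd b [Q]" using snoc.prems by (simp add: pd_Cons pd_def)
    ultimately have "pd b ((yss @ [P]) @ [Q])" using snoc.prems(2) unfolding pd_append[of b "yss @ [P]" "[Q]"] by simp
    then show ?thesis by (intro exI[of _ "(yss @ [P]) @ [Q]"]) simp
  next
    case False
    have s: "sorted (concat yss @ (P @ Q))" using snoc.prems(1) by simp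
    hence "sorted (P @ Q)" by (simp add: sorted_append)
    hence "wc b (P @ Q)" using merge_wc[OF assms(1) _ Pne snoc.prems(3) wP snoc.prems(4)] False by simp
    from snoc.IH[OF s pdy _ this] Pne obtain zss where "concat zss = concat yss @ (P @ Q) \<and> pd b zss" by auto
    then show ?thesis by (intro exI[of _ zss]) simp
  qed
qed

lemma ex_pd: assumes "b \<ge> 0" "sorted xs" shows "\<exists>yss. concat yss = xs \<and> pd b yss"
  using assms(2)
proof (induction xs rule: rev_induct)
  case Nil
  then show ?case by (intro exI[of _ "[]"]) (simp add: pd_def)
next
  case (snoc x xs)
  then obtain yss where y: "concat yss = xs" "pd b yss" by (auto simp: sorted_append)
  show ?case using ex_pd_aux[OF assms(1), of yss "[x]"] y snoc.prems wc_single[OF assms(1)] by auto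
qed

lemma prefix_lo:
  assumes "pd b yss" "0 < m" "m \<le> length (concat yss)"
  shows "lo b (hd yss) \<le> lo b (take m (concat yss))"
  using assms
proof (induction yss arbitrary: m)
  case Nil then show ?case by simp
next
  case (Cons P R)
  have Pne: "P \<noteq> []" and wP: "wc b P" and ord: "\<forall>Q\<in>set R. hi b P < lo b Q" and pdR: "pd b R"
    using Cons.prems(1) by (auto simp: pd_Cons)
  show ?case
  proof (cases "m \<le> length P")
    case True
    then show ?thesis using wc_sub[OF wP, of 0 m] Cons.prems by simp
  next
    case False
    define B where "B = take (m - length P) (concat R)"
    have tk: "take m (concat (P # R)) = P @ B" using False unfolding B_def by simp
    have e: "length (concat (P # R)) = length P + length (concat R)" by simp
    have "length (concat R) \<noteq> 0" using e False Cons.prems(3) by linarith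
    hence lc: "concat R \<noteq> []" by (metis list.size(3))
    have Bne: "B \<noteq> []" using False lc unfolding B_def by simp
    have Rne: "R \<noteq> []" using Bne unfolding B_def by auto
    have "lo b (hd R) \<le> lo b B" using Cons.IH[OF pdR, of "m - length P"] False Cons.prems unfolding B_def by simp
    moreover have "hi b P < lo b (hd R)" using ord Rne by simp
    ultimately have "lo b P \<le> lo b (P @ B)" using loX_ge Pne Bne by (meson less_eq_real_def order.strict_trans2)
    then show ?thesis using tk by simp
  qed
qed

lemma suffix_hi:
  assumes "b \<ge> 0" "pd b yss" "m < length (concat yss)"
  shows "hi b (drop m (concat yss)) \<le> hi b (last yss)"
  using assms(2,3)
proof (induction yss arbitrary: m)
  case Nil then show ?case by simp
next
  case (Cons P R)
  have Pne: "P \<noteq> []" and wP: "wc b P" and ord: "\<forall>Q\<in>set R. hi b P < lo b Q" and pdR: "pd b R"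
    using Cons.prems(1) by (auto simp: pd_Cons)
  show ?case
  proof (cases "R = []")
    case True
    then show ?thesis using wc_sub[OF wP, of m "length P"] Cons.prems by simp
  next
    case Rne: False
    define C where "C = concat R"
    have Cne: "C \<noteq> []" using Rne pdR unfolding C_def pd_def by (cases R) auto
    show ?thesis
    proof (cases "length P \<le> m")
      case True
      then show ?thesis using Cons.IH[OF pdR, of "m - length P"] Cons.prems Rne by simp
    next
      case False
      define A where "A = drop m P"
      have Ane: "A \<noteq> []" using False unfolding A_def by simp
      have dr: "drop m (concat (P # R)) = A @ C" using False unfolding A_def C_def by simp
      have h1: "hi b A \<le> hi b P" using wc_sub[OF wP, of m "length P"] False unfolding A_def by simp
      have h2: "hi b P < lo b (hd R)" using ord Rne by simp
      have h3: "lo b (hd R) \<le> lo b C" using prefix_lo[OF pdR, of "length C"] Cne unfolding C_def by simp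
      have "hi b (A @ C) \<le> hi b C" using hiY_le[OF Ane Cne] h1 h2 h3 by simp
      moreover have "hi b C \<le> hi b (last R)" using Cons.IH[OF pdR, of 0] Cne unfolding C_def by simp
      ultimately show ?thesis using dr Rne by simp
    qed
  qed
qed

lemma no_longer:
  assumes "pd b (P # R)" "wc b Q" "Q = take (length Q) (concat (P # R))" "length P < length Q"
    "length Q \<le> length (concat (P # R))"
  shows False
proof -
  have Pne: "P \<noteq> []" and ord: "\<forall>Q\<in>set R. hi b P < lo b Q" and pdR: "pd b R"
    using assms(1) by (auto simp: pd_Cons)
  define B where "B = take (length Q - length P) (concat R)"
  have QPB: "Q = P @ B" using assms(3,4) unfolding B_def
    by (metis append_eq_conv_conj concat.simps(2) less_imp_le_nat take_add le_add_diff_inverse)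
  have e: "length (concat (P # R)) = length P + length (concat R)" by simp
  have "length (concat R) \<noteq> 0" using e assms(4,5) by linarith
  hence lc: "concat R \<noteq> []" by (metis list.size(3))
  have Bne: "B \<noteq> []" using lc assms(4) unfolding B_def by simp
  have Rne: "R \<noteq> []" using Bne unfolding B_def by (metis concat.simps(1) take_Nil)
  have "lo b (hd R) \<le> lo b B" using prefix_lo[OF pdR, of "length Q - length P"] assms(4,5) unfolding B_def by simp
  moreover have "hi b P < lo b (hd R)" using ord Rne by simp
  ultimately have "lo b P < lo b Q" using loX_gt[OF Pne Bne] QPB by simp
  moreover have "lo b Q \<le> lo b P" using wc_sub[OF assms(2), of 0 "length P"] assms(4) QPB Pne by simp
  ultimately show False by simp
qed

lemma pd_unique: "concat yss = concat zss \<Longrightarrow> pd b yss \<Longrightarrow> pd b zss \<Longrightarrow> yss = zss"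
proof (induction yss arbitrary: zss)
  case Nil
  then show ?case by (cases zss) (auto simp: pd_Cons)
next
  case (Cons P R1)
  have Pne: "P \<noteq> []" using Cons.prems by (simp add: pd_Cons)
  then obtain Q R2 where z: "zss = Q # R2" using Cons.prems by (cases zss) auto
  have Qne: "Q \<noteq> []" and wQ: "wc b Q" and wP: "wc b P" using Cons.prems z by (auto simp: pd_Cons)
  have eq: "P @ concat R1 = Q @ concat R2" using Cons.prems z by simp
  have "length P = length Q"
  proof (rule ccontr)
    assume "length P \<noteq> length Q"
    then consider "length P < length Q" | "length Q < length P" by linarith
    then show False
    proof cases
      case 1
      have "length Q \<le> length (concat (P # R1))" using eq by (simp add: z)
      moreover have "Q = take (length Q) (concat (P # R1))" using eq append_eq_conv_conj by (metis concat.simps(2))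
      ultimately show False using no_longer[OF Cons.prems(2) wQ] 1 by blast
    next
      case 2
      have "length P \<le> length (concat (Q # R2))" using arg_cong[OF eq, of length] by simp
      moreover have "P = take (length P) (concat (Q # R2))" using eq append_eq_conv_conj by (metis concat.simps(2))
      ultimately show False using no_longer[OF Cons.prems(3)[unfolded z] wP] 2 by blast
    qed
  qed
  hence "P = Q" "concat R1 = concat R2" using eq by auto
  moreover have "R1 = R2" using Cons.IH[of R2] Cons.prems z calculation by (simp add: pd_Cons)
  ultimately show ?case using z by simp
qed


lemma ctr_mset: "ctr (mset ys) = cen ys"
  unfolding ctr_def cen_def by (simp add: sum_mset_sum_list)

lemma box_mset: "box b (mset ys) = {lo b ys .. hi b ys}"
  unfolding box_def lo_def hi_def ctr_mset by simp

lemma wc_iff: assumes "sorted ys" "b \<ge> 0"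
  shows "well_contained b (mset ys) \<longleftrightarrow> wc b ys"
proof -
  have s: "sorted_list_of_multiset (mset ys) = ys" using assms(1) by (simp add: sorted_sort_id)
  have "well_contained b (mset ys) \<longleftrightarrow> (\<forall>p q. p \<le> q \<and> q < length ys \<longrightarrow>
      {lo b (drop p (take (Suc q) ys)) .. hi b (drop p (take (Suc q) ys))} \<subseteq> {lo b ys .. hi b ys})"
    unfolding well_contained_def s box_mset by (simp add: drop_take)
  also have "\<dots> \<longleftrightarrow> (\<forall>p q. p \<le> q \<and> q < length ys \<longrightarrow>
      lo b ys \<le> lo b (drop p (take (Suc q) ys)) \<and> hi b (drop p (take (Suc q) ys)) \<le> hi b ys)"
    using lo_le_hi[OF assms(2)] by (simp add: atLeastatMost_subset_iff)
  also have "\<dots> \<longleftrightarrow> wc b ys" unfolding wc_def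
  proof (intro iffI allI impI)
    fix i j assume H: "\<forall>p q. p \<le> q \<and> q < length ys \<longrightarrow>
      lo b ys \<le> lo b (drop p (take (Suc q) ys)) \<and> hi b (drop p (take (Suc q) ys)) \<le> hi b ys"
      and ij: "i < j \<and> j \<le> length ys"
    then obtain q where "j = Suc q" by (cases j) auto
    thus "lo b ys \<le> lo b (drop i (take j ys)) \<and> hi b (drop i (take j ys)) \<le> hi b ys"
      using H ij by auto
  next
    fix p q assume H: "\<forall>i j. i < j \<and> j \<le> length ys \<longrightarrow>
      lo b ys \<le> lo b (drop i (take j ys)) \<and> hi b (drop i (take j ys)) \<le> hi b ys"
      and pq: "p \<le> q \<and> q < length ys"
    thus "lo b ys \<le> lo b (drop p (take (Suc q) ys)) \<and> hi b (drop p (take (Suc q) ys)) \<le> hi b ys"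
      by auto
  qed
  finally show ?thesis .
qed

lemma pts_in_box: assumes "wc b Y" "x \<in> set Y" "b \<ge> 0" shows "lo b Y \<le> x" "x \<le> hi b Y"
proof -
  obtain p where p: "p < length Y" "Y ! p = x" using assms(2) by (metis in_set_conv_nth)
  have d: "drop p (take (Suc p) Y) = [x]" using p by (simp add: take_Suc_conv_app_nth)
  have "lo b Y \<le> lo b [x]" "hi b [x] \<le> hi b Y" using wc_sub[OF assms(1), of p "Suc p"] p d by auto
  moreover have "lo b [x] = x - b" "hi b [x] = x + b" unfolding lo_def hi_def cen_def by simp_all
  ultimately show "lo b Y \<le> x" "x \<le> hi b Y" using assms(3) by linarith+
qed

lemma sorted_concat_rel: "(\<forall>Y\<in>set yss. sorted Y) \<Longrightarrow> sorted_wrt (\<lambda>P Q. \<forall>x\<in>set P. \<forall>y\<in>set Q. x \<le> y) yss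
   \<Longrightarrow> sorted (concat yss)"
  by (induction yss) (auto simp: sorted_append)

lemma sorted_concat_part: "sorted (concat yss) \<Longrightarrow> Y \<in> set yss \<Longrightarrow> sorted Y"
proof -
  assume a: "sorted (concat yss)" "Y \<in> set yss"
  then obtain A B where "yss = A @ Y # B" by (meson split_list)
  thus ?thesis using a(1) by (simp add: sorted_append)
qed

lemma pd_sorted: assumes "pd b yss" "b \<ge> 0" "\<forall>Y\<in>set yss. sorted Y" shows "sorted (concat yss)"
proof (rule sorted_concat_rel[OF assms(3)])
  have "sorted_wrt (\<lambda>P Q. hi b P < lo b Q) yss" "\<forall>Y\<in>set yss. Y \<noteq> [] \<and> wc b Y" using assms(1) unfolding pd_def by auto
  thus "sorted_wrt (\<lambda>P Q. \<forall>x\<in>set P. \<forall>y\<in>set Q. x \<le> y) yss"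
  proof (induction yss)
    case Nil then show ?case by simp
  next
    case (Cons P R)
    have "\<forall>Q\<in>set R. \<forall>x\<in>set P. \<forall>y\<in>set Q. x \<le> y"
    proof (intro ballI)
      fix Q x y assume "Q \<in> set R" "x \<in> set P" "y \<in> set Q"
      hence "x \<le> hi b P" "hi b P < lo b Q" "lo b Q \<le> y" using Cons.prems pts_in_box[OF _ _ assms(2)] by auto
      thus "x \<le> y" by linarith
    qed
    then show ?case using Cons by auto
  qed
qed

lemma sum_list_mset: "sum_list (map mset yss) = mset (concat yss)"
  by (induction yss) auto

lemma decomp_of_pd: assumes "b \<ge> 0" "pd b yss" "concat yss = sorted_list_of_multiset z"
  shows "is_box_decomp b z (map mset yss)"
proof -
  have s: "sorted (concat yss)" using assms(3) by simp
  have "sum_list (map mset yss) = z" using assms(3) by (simp add: sum_list_mset)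
  moreover have "\<forall>w\<in>set (map mset yss). w \<noteq> {#} \<and> well_contained b w"
    using assms(2) wc_iff[OF sorted_concat_part[OF s] assms(1)] unfolding pd_def by auto
  moreover have "\<forall>i j. i < j \<and> j < length (map mset yss) \<longrightarrow>
     (\<forall>u\<in>box b (map mset yss ! i). \<forall>v\<in>box b (map mset yss ! j). u < v)"
  proof (intro allI impI ballI)
    fix i j u v assume ij: "i < j \<and> j < length (map mset yss)" and
      u: "u \<in> box b (map mset yss ! i)" and v: "v \<in> box b (map mset yss ! j)"
    have "hi b (yss ! i) < lo b (yss ! j)" using assms(2) ij unfolding pd_def sorted_wrt_iff_nth_less by auto
    moreover have "u \<le> hi b (yss ! i)" "lo b (yss ! j) \<le> v" using u v ij by (auto simp: box_mset)
    ultimately show "u < v" by linarith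
  qed
  ultimately show ?thesis unfolding is_box_decomp_def by blast
qed

lemma pd_of_decomp: assumes "b \<ge> 0" "is_box_decomp b z zs"
  shows "pd b (map sorted_list_of_multiset zs) \<and> concat (map sorted_list_of_multiset zs) = sorted_list_of_multiset z"
proof -
  define yss where "yss = map sorted_list_of_multiset zs"
  have zs: "zs = map mset yss" unfolding yss_def by (simp add: map_idI)
  have parts: "\<forall>Y\<in>set yss. Y \<noteq> [] \<and> wc b Y"
  proof
    fix Y assume "Y \<in> set yss"
    then obtain w where w: "w \<in> set zs" "Y = sorted_list_of_multiset w" unfolding yss_def by auto
    hence "w \<noteq> {#}" "well_contained b w" using assms(2) unfolding is_box_decomp_def by auto
    moreover have mY: "mset Y = w" using w by simp
    ultimately have "Y \<noteq> []" by auto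
    moreover have "wc b Y" using wc_iff[of Y b] w assms(1) mY \<open>well_contained b w\<close> by simp
    ultimately show "Y \<noteq> [] \<and> wc b Y" by simp
  qed
  have ord: "sorted_wrt (\<lambda>P Q. hi b P < lo b Q) yss"
    unfolding sorted_wrt_iff_nth_less
  proof (intro allI impI)
    fix i j assume ij: "i < j" "j < length yss"
    have ne: "yss ! i \<noteq> []" "yss ! j \<noteq> []" using parts ij by auto
    have "\<forall>u\<in>box b (zs ! i). \<forall>v\<in>box b (zs ! j). u < v" using assms(2) ij unfolding is_box_decomp_def yss_def by auto
    moreover have "box b (zs ! i) = {lo b (yss ! i) .. hi b (yss ! i)}" "box b (zs ! j) = {lo b (yss ! j) .. hi b (yss ! j)}"
      using ij unfolding zs by (auto simp: box_mset)
    moreover have "hi b (yss ! i) \<in> {lo b (yss ! i) .. hi b (yss ! i)}" "lo b (yss ! j) \<in> {lo b (yss ! j) .. hi b (yss ! j)}"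
      using lo_le_hi[OF assms(1)] by auto
    ultimately show "hi b (yss ! i) < lo b (yss ! j)" by metis
  qed
  have pdy: "pd b yss" using parts ord unfolding pd_def by auto
  have "sorted (concat yss)" using pd_sorted[OF pdy assms(1)] unfolding yss_def by auto
  moreover have mz: "mset (concat yss) = z" using assms(2) unfolding is_box_decomp_def zs sum_list_mset by simp
  have "sorted_list_of_multiset z = sort (concat yss)" unfolding mz[symmetric] by simp
  ultimately have "concat yss = sorted_list_of_multiset z" by (simp add: sorted_sort_id)
  thus ?thesis using pdy unfolding yss_def by simp
qed

lemma box_decomp_eq: assumes "b \<ge> 0" "pd b yss" "concat yss = sorted_list_of_multiset z"
  shows "box_decomp b z = map mset yss"
  unfolding box_decomp_def
proof (rule the_equality)
  show "is_box_decomp b z (map mset yss)" by (rule decomp_of_pd[OF assms])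
next
  fix zs assume "is_box_decomp b z zs"
  from pd_of_decomp[OF assms(1) this] have "map sorted_list_of_multiset zs = yss"
    using pd_unique[of "map sorted_list_of_multiset zs" yss b] assms by simp
  hence "map mset yss = map mset (map sorted_list_of_multiset zs)" by simp
  also have "\<dots> = zs" by (induction zs) auto
  finally show "zs = map mset yss" by simp
qed


definition cond :: "real \<Rightarrow> real list \<Rightarrow> nat \<Rightarrow> real \<Rightarrow> bool" where
  "cond b xs k t \<longleftrightarrow> k \<le> length xs \<and> (\<forall>m<k. hi b (drop m (take k xs)) < t) \<and>
     (\<forall>L. 0 < L \<and> k + L \<le> length xs \<longrightarrow> t < lo b (take L (drop k xs)))"

lemma split_or_straddle: "k \<le> length (concat yss) \<Longrightarrow>
  (\<exists>Ls Rs. yss = Ls @ Rs \<and> length (concat Ls) = k) \<or>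
  (\<exists>Ls Y Rs. yss = Ls @ Y # Rs \<and> length (concat Ls) < k \<and> k < length (concat Ls) + length Y)"
proof (induction yss arbitrary: k)
  case Nil then show ?case by (intro disjI1 exI[of _ "[]"] exI[of _ "[]"]) simp
next
  case (Cons Y R)
  show ?case
  proof (cases "k = 0")
    case True then show ?thesis by (intro disjI1 exI[of _ "[]"] exI[of _ "Y # R"]) simp
  next
    case k0: False
    show ?thesis
    proof (cases "k < length Y")
      case True then show ?thesis using k0 by (intro disjI2 exI[of _ "[]"] exI[of _ Y] exI[of _ R]) auto
    next
      case False
      then have "k - length Y \<le> length (concat R)" using Cons.prems by simp
      from Cons.IH[OF this] show ?thesis
      proof
        assume "\<exists>Ls Rs. R = Ls @ Rs \<and> length (concat Ls) = k - length Y"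
        then obtain Ls Rs where "R = Ls @ Rs" "length (concat Ls) = k - length Y" by blast
        hence "Y # R = (Y # Ls) @ Rs \<and> length (concat (Y # Ls)) = k" using False by simp
        thus ?thesis by blast
      next
        assume "\<exists>Ls Z Rs. R = Ls @ Z # Rs \<and> length (concat Ls) < k - length Y \<and> k - length Y < length (concat Ls) + length Z"
        then obtain Ls Z Rs where "R = Ls @ Z # Rs" "length (concat Ls) < k - length Y" "k - length Y < length (concat Ls) + length Z" by blast
        hence "Y # R = (Y # Ls) @ Z # Rs \<and> length (concat (Y # Ls)) < k \<and> k < length (concat (Y # Ls)) + length Z"
          using False by simp linarith
        thus ?thesis by blast
      qed
    qed
  qed
qed

lemma U_char: assumes b: "b \<ge> 0" and pd: "pd b yss" and xs: "concat yss = xs"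
  shows "(t \<notin> (\<Union>Y\<in>set yss. {lo b Y..hi b Y}) \<and> length (filter (\<lambda>x. x < t) xs) = k) \<longleftrightarrow> cond b xs k t"
proof
  assume H: "t \<notin> (\<Union>Y\<in>set yss. {lo b Y..hi b Y}) \<and> length (filter (\<lambda>x. x < t) xs) = k"
  define Ls where "Ls = takeWhile (\<lambda>Y. hi b Y < t) yss"
  define Rs where "Rs = dropWhile (\<lambda>Y. hi b Y < t) yss"
  have yLR: "yss = Ls @ Rs" unfolding Ls_def Rs_def by simp
  have pdL: "pd b Ls" and pdR: "pd b Rs" using pd yLR pd_append by metis+
  have hL: "\<forall>Y\<in>set Ls. hi b Y < t" unfolding Ls_def by (auto dest: set_takeWhileD)
  have hR: "\<forall>Y\<in>set Rs. t < lo b Y"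
  proof (cases Rs)
    case Nil then show ?thesis by simp
  next
    case (Cons Y0 R')
    have "\<not> hi b Y0 < t" using Cons hd_dropWhile[of "\<lambda>Y. hi b Y < t" yss] unfolding Rs_def by auto
    moreover have "Y0 \<in> set yss" using yLR Cons by auto
    ultimately have t0: "t < lo b Y0" using H by force
    have "\<forall>Y\<in>set R'. hi b Y0 < lo b Y" using pdR Cons by (simp add: pd_Cons)
    then show ?thesis using t0 Cons lo_le_hi[OF b, of Y0] by force
  qed
  have pL: "\<forall>x\<in>set (concat Ls). x < t"
  proof
    fix x assume "x \<in> set (concat Ls)"
    then obtain Y where "Y \<in> set Ls" "x \<in> set Y" by auto
    moreover hence "wc b Y" using pdL unfolding pd_def by auto
    ultimately show "x < t" using pts_in_box[OF _ _ b] hL by force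
  qed
  have pR: "\<forall>x\<in>set (concat Rs). t < x"
  proof
    fix x assume "x \<in> set (concat Rs)"
    then obtain Y where "Y \<in> set Rs" "x \<in> set Y" by auto
    moreover hence "wc b Y" using pdR unfolding pd_def by auto
    ultimately show "t < x" using pts_in_box[OF _ _ b] hR by force
  qed
  have f1: "filter (\<lambda>x. x < t) (concat Ls) = concat Ls" by (rule filter_True) (use pL in auto)
  have f2: "filter (\<lambda>x. x < t) (concat Rs) = []" by (rule filter_False) (use pR in force)
  have "filter (\<lambda>x. x < t) xs = concat Ls" unfolding xs[symmetric] yLR using f1 f2 by simp
  hence k: "k = length (concat Ls)" using H by simp
  have tk: "take k xs = concat Ls" and dk: "drop k xs = concat Rs" using k yLR xs by auto
  show "cond b xs k t" unfolding cond_def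
  proof (intro conjI allI impI)
    show "k \<le> length xs" using k yLR xs by auto
  next
    fix m assume m: "m < k"
    hence Lne: "Ls \<noteq> []" using k by auto
    have "hi b (drop m (concat Ls)) \<le> hi b (last Ls)" using suffix_hi[OF b pdL] m k by simp
    moreover have "hi b (last Ls) < t" using hL Lne by simp
    ultimately show "hi b (drop m (take k xs)) < t" using tk by simp
  next
    fix L assume L: "0 < L \<and> k + L \<le> length xs"
    have "length (concat Rs) = length xs - k" unfolding dk[symmetric] by simp
    hence Ll: "L \<le> length (concat Rs)" using L by linarith
    hence Rne: "Rs \<noteq> []" using L by auto
    have "lo b (hd Rs) \<le> lo b (take L (concat Rs))" using prefix_lo[OF pdR] L Ll by simp
    moreover have "t < lo b (hd Rs)" using hR Rne by simp
    ultimately show "t < lo b (take L (drop k xs))" using dk by simp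
  qed
next
  assume C: "cond b xs k t"
  have kl: "k \<le> length (concat yss)" using C xs unfolding cond_def by simp
  have "\<exists>Ls Rs. yss = Ls @ Rs \<and> length (concat Ls) = k"
  proof (rule ccontr)
    assume "\<not> ?thesis"
    then obtain Ls Y Rs where s: "yss = Ls @ Y # Rs" "length (concat Ls) < k" "k < length (concat Ls) + length Y"
      using split_or_straddle[OF kl] by blast
    define d where "d = k - length (concat Ls)"
    define A where "A = take d Y"
    define B where "B = drop d Y"
    have d: "0 < d" "d < length Y" using s unfolding d_def by auto
    have Ane: "A \<noteq> []" and Bne: "B \<noteq> []" using d unfolding A_def B_def by auto
    have xsplit: "xs = concat Ls @ Y @ concat Rs" using s xs by simp
    have "take k xs = concat Ls @ A" unfolding xsplit A_def d_def using s by simp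
    hence "A = drop (length (concat Ls)) (take k xs)" by simp
    hence hA: "hi b A < t" using C s unfolding cond_def by auto
    have "drop k xs = B @ concat Rs" unfolding xsplit B_def d_def using s by simp
    hence "B = take (length Y - d) (drop k xs)" using d unfolding B_def by simp
    moreover have "k + (length Y - d) \<le> length xs" using xsplit d s unfolding d_def by simp
    ultimately have lB: "t < lo b B" using C d unfolding cond_def by auto
    have "lo b A < lo b (A @ B)" using loX_gt[OF Ane Bne] hA lB by simp
    moreover have "A @ B = Y" unfolding A_def B_def by simp
    moreover have "Y \<in> set yss" using s by simp
    hence "wc b Y" using pd unfolding pd_def by auto
    hence "lo b Y \<le> lo b A" using wc_sub[of b Y 0 d] d unfolding A_def by simp
    ultimately show False by simp
  qed
  then obtain Ls Rs where s: "yss = Ls @ Rs" "length (concat Ls) = k" by blast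
  have pdL: "pd b Ls" and pdR: "pd b Rs" using pd s pd_append by metis+
  have tk: "take k xs = concat Ls" and dk: "drop k xs = concat Rs" using s xs by auto
  have hL: "\<forall>Y\<in>set Ls. hi b Y < t"
  proof (cases Ls rule: rev_exhaust)
    case Nil then show ?thesis by simp
  next
    case (snoc Ls' l)
    have lne: "l \<noteq> []" using pdL snoc unfolding pd_def by auto
    have "l = drop (length (concat Ls')) (take k xs)" using tk snoc by simp
    moreover have "length (concat Ls') < k"
    proof -
      have "length (concat Ls') + length l = k" using s snoc by simp
      moreover have "length l > 0" using lne by simp
      ultimately show ?thesis by linarith
    qed
    ultimately have hl: "hi b l < t" using C unfolding cond_def by auto
    have "pd b (Ls' @ [l])" using pdL snoc by simp
    hence "\<forall>Y\<in>set Ls'. hi b Y < lo b l" unfolding pd_append by simp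
    thus ?thesis using hl snoc lo_le_hi[OF b, of l] by force
  qed
  have hR: "\<forall>Y\<in>set Rs. t < lo b Y"
  proof (cases Rs)
    case Nil then show ?thesis by simp
  next
    case (Cons r Rs')
    have rne: "r \<noteq> []" using pdR Cons unfolding pd_def by auto
    have "r = take (length r) (drop k xs)" using dk Cons by simp
    moreover have "k + length r \<le> length xs" using s xs Cons by auto
    ultimately have hr: "t < lo b r" using C rne unfolding cond_def by (metis length_greater_0_conv)
    have "\<forall>Y\<in>set Rs'. hi b r < lo b Y" using pdR Cons by (simp add: pd_Cons)
    thus ?thesis using hr Cons lo_le_hi[OF b, of r] by force
  qed
  have "t \<notin> (\<Union>Y\<in>set yss. {lo b Y..hi b Y})" using hL hR s by force
  moreover
  have pL: "\<forall>x\<in>set (concat Ls). x < t"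
  proof
    fix x assume "x \<in> set (concat Ls)"
    then obtain Y where "Y \<in> set Ls" "x \<in> set Y" by auto
    moreover hence "wc b Y" using pdL unfolding pd_def by auto
    ultimately show "x < t" using pts_in_box[OF _ _ b] hL by force
  qed
  have pR: "\<forall>x\<in>set (concat Rs). t < x"
  proof
    fix x assume "x \<in> set (concat Rs)"
    then obtain Y where "Y \<in> set Rs" "x \<in> set Y" by auto
    moreover hence "wc b Y" using pdR unfolding pd_def by auto
    ultimately show "t < x" using pts_in_box[OF _ _ b] hR by force
  qed
  have f1: "filter (\<lambda>x. x < t) (concat Ls) = concat Ls" by (rule filter_True) (use pL in auto)
  have f2: "filter (\<lambda>x. x < t) (concat Rs) = []" by (rule filter_False) (use pR in force)
  have "filter (\<lambda>x. x < t) xs = concat Ls" unfolding xs[symmetric] s(1) using f1 f2 by simp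
  hence "length (filter (\<lambda>x. x < t) xs) = k" using s by simp
  ultimately show "t \<notin> (\<Union>Y\<in>set yss. {lo b Y..hi b Y}) \<and> length (filter (\<lambda>x. x < t) xs) = k" by simp
qed

lemma U_set_char: assumes b: "b > 0"
  shows "U_set b a n i = {z. size z = n \<and> cond b (sorted_list_of_multiset z) i (a i)}"
proof -
  have "z \<in> U_set b a n i \<longleftrightarrow> size z = n \<and> cond b (sorted_list_of_multiset z) i (a i)" for z
  proof -
    obtain yss where y: "concat yss = sorted_list_of_multiset z" "pd b yss"
      using ex_pd[of b "sorted_list_of_multiset z"] b by auto
    have bd: "box_decomp b z = map mset yss" using box_decomp_eq[of b yss z] b y by simp
    have u: "(\<Union>w\<in>set (box_decomp b z). box b w) = (\<Union>Y\<in>set yss. {lo b Y..hi b Y})"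
      unfolding bd by (simp add: box_mset)
    have f: "size (filter_mset (\<lambda>x. x < a i) z) = length (filter (\<lambda>x. x < a i) (sorted_list_of_multiset z))"
      by (metis mset_filter mset_sorted_list_of_multiset size_mset)
    show ?thesis unfolding U_set_def mem_Collect_eq u f using U_char[of b yss] b y by auto
  qed
  thus ?thesis by blast
qed


definition TS :: "real \<Rightarrow> (nat \<Rightarrow> real) \<Rightarrow> nat \<Rightarrow> nat \<Rightarrow> real list \<Rightarrow> real list" where
  "TS b a n k xs = [avg xs (k - i) k + real (i + 1) * b - a k. i \<leftarrow> [0..<k]] @
        [a k - avg xs (k + 1) (k + 1 + i) + real (i + 1) * b. i \<leftarrow> [0..<n - k]]"

lemma rho_TS: "rho \<theta> \<delta> b a n k z = reg_max \<theta> \<delta> (TS b a n k (sorted_list_of_multiset z))"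
  unfolding rho_def TS_def Let_def by simp

lemma length_TS: "k \<le> n \<Longrightarrow> length (TS b a n k xs) = n"
  unfolding TS_def by simp

lemma sum_blk: "1 \<le> p \<Longrightarrow> q \<le> length xs \<Longrightarrow> (\<Sum>j=p..q. xs ! (j - 1)) = sum_list (drop (p - 1) (take q xs))"
proof (induction q)
  case 0 then show ?case by simp
next
  case (Suc q)
  show ?case
  proof (cases "Suc q < p")
    case True
    then show ?thesis by simp
  next
    case False
    have tk: "take (Suc q) xs = take q xs @ [xs ! q]" using Suc.prems by (simp add: take_Suc_conv_app_nth)
    have "drop (p - 1) (take (Suc q) xs) = drop (p - 1) (take q xs) @ [xs ! q]"
      unfolding tk using False Suc.prems by simp
    moreover have "(\<Sum>j=p..Suc q. xs ! (j - 1)) = (\<Sum>j=p..q. xs ! (j - 1)) + xs ! q"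
      using False by (simp add: sum.cl_ivl_Suc)
    ultimately show ?thesis using Suc by simp
  qed
qed

lemma avg_blk: assumes "1 \<le> p" "p \<le> q" "q \<le> length xs"
  shows "avg xs p q = cen (drop (p - 1) (take q xs))"
  unfolding avg_def cen_def using sum_blk[OF assms(1,3)] assms by simp

lemma TS_left: assumes "length xs = n" "k \<le> n" "j < k"
  shows "TS b a n k xs ! j = hi b (drop (k - Suc j) (take k xs)) - a k"
proof -
  have "TS b a n k xs ! j = avg xs (k - j) k + real (j + 1) * b - a k" unfolding TS_def using assms by (simp add: nth_append)
  moreover have "avg xs (k - j) k = cen (drop (k - Suc j) (take k xs))" using avg_blk[of "k - j" k xs] assms
    by (simp add: Suc_diff_Suc)
  moreover have "length (drop (k - Suc j) (take k xs)) = j + 1" using assms by simp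
  ultimately show ?thesis unfolding hi_def by simp
qed

lemma TS_right: assumes "length xs = n" "k \<le> j" "j < n"
  shows "TS b a n k xs ! j = a k - lo b (take (j - k + 1) (drop k xs))"
proof -
  have "TS b a n k xs ! j = a k - avg xs (k + 1) (k + 1 + (j - k)) + real (j - k + 1) * b"
    unfolding TS_def using assms by (simp add: nth_append)
  moreover have "avg xs (k + 1) (k + 1 + (j - k)) = cen (take (j - k + 1) (drop k xs))"
    using avg_blk[of "k + 1" "k + 1 + (j - k)" xs] assms by (simp add: drop_take Suc_diff_le)
  moreover have "length (take (j - k + 1) (drop k xs)) = j - k + 1" using assms by simp
  ultimately show ?thesis unfolding lo_def by simp
qed

lemma cond_TS: assumes "length xs = n" "k \<le> n"
  shows "cond b xs k (a k) \<longleftrightarrow> (\<forall>j<n. TS b a n k xs ! j < 0)"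
proof
  assume C: "cond b xs k (a k)"
  show "\<forall>j<n. TS b a n k xs ! j < 0"
  proof (intro allI impI)
    fix j assume j: "j < n"
    show "TS b a n k xs ! j < 0"
    proof (cases "j < k")
      case True
      then show ?thesis using TS_left[OF assms True] C unfolding cond_def by simp
    next
      case False
      have "a k < lo b (take (j - k + 1) (drop k xs))" using C False j assms unfolding cond_def by auto
      then show ?thesis using TS_right[OF assms(1) _ j] False by simp
    qed
  qed
next
  assume T: "\<forall>j<n. TS b a n k xs ! j < 0"
  show "cond b xs k (a k)" unfolding cond_def
  proof (intro conjI allI impI)
    show "k \<le> length xs" using assms by simp
  next
    fix m assume m: "m < k"
    have "TS b a n k xs ! (k - Suc m) < 0" using T m assms by simp
    moreover have "k - Suc (k - Suc m) = m" using m by simp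
    ultimately show "hi b (drop m (take k xs)) < a k" using TS_left[OF assms, of "k - Suc m"] m by simp
  next
    fix L assume L: "0 < L \<and> k + L \<le> length xs"
    have "k + L - 1 < n" using L assms by linarith
    hence "TS b a n k xs ! (k + L - 1) < 0" using T by blast
    moreover have "k + L - 1 - k + 1 = L" using L by simp
    moreover have "TS b a n k xs ! (k + L - 1) = a k - lo b (take (k + L - 1 - k + 1) (drop k xs))"
      by (rule TS_right[OF assms(1)]) (use L assms in linarith)+
    ultimately show "a k < lo b (take L (drop k xs))" by simp
  qed
qed

lemma avg_lip: assumes "length xs = length ys" "\<forall>i<length xs. \<bar>xs ! i - ys ! i\<bar> \<le> e" "1 \<le> p" "p \<le> q" "q \<le> length xs"
  shows "\<bar>avg xs p q - avg ys p q\<bar> \<le> e"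
proof -
  have "\<bar>(\<Sum>j=p..q. xs ! (j - 1)) - (\<Sum>j=p..q. ys ! (j - 1))\<bar> = \<bar>\<Sum>j=p..q. xs ! (j - 1) - ys ! (j - 1)\<bar>"
    by (simp add: sum_subtractf)
  also have "\<dots> \<le> (\<Sum>j=p..q. \<bar>xs ! (j - 1) - ys ! (j - 1)\<bar>)" by (rule sum_abs)
  also have "\<dots> \<le> (\<Sum>j=p..q. e)" using assms by (intro sum_mono) auto
  also have "\<dots> = real (q - p + 1) * e" using assms by simp
  finally have h: "\<bar>(\<Sum>j=p..q. xs ! (j - 1)) - (\<Sum>j=p..q. ys ! (j - 1))\<bar> \<le> real (q - p + 1) * e" .
  have pos: "real (q - p + 1) > 0" by simp
  have "avg xs p q - avg ys p q = ((\<Sum>j=p..q. xs ! (j - 1)) - (\<Sum>j=p..q. ys ! (j - 1))) / real (q - p + 1)"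
    unfolding avg_def by (simp add: diff_divide_distrib)
  hence "\<bar>avg xs p q - avg ys p q\<bar> = \<bar>(\<Sum>j=p..q. xs ! (j - 1)) - (\<Sum>j=p..q. ys ! (j - 1))\<bar> / real (q - p + 1)"
    by simp
  also have "\<dots> \<le> e" using h pos by (simp add: divide_le_eq mult.commute)
  finally show ?thesis .
qed

lemma TS_lip: assumes "length xs = n" "length ys = n" "k \<le> n" "\<forall>i<n. \<bar>xs ! i - ys ! i\<bar> \<le> e" "j < n"
  shows "\<bar>TS b a n k xs ! j - TS b a n k ys ! j\<bar> \<le> e"
proof (cases "j < k")
  case True
  have "\<bar>avg xs (k - j) k - avg ys (k - j) k\<bar> \<le> e" using avg_lip[of xs ys e "k - j" k] assms True by simp
  then show ?thesis unfolding TS_def using True assms by (simp add: nth_append)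
next
  case False
  have "\<bar>avg xs (k + 1) (k + 1 + (j - k)) - avg ys (k + 1) (k + 1 + (j - k))\<bar> \<le> e"
    using avg_lip[of xs ys e "k + 1" "k + 1 + (j - k)"] assms False by simp
  then show ?thesis unfolding TS_def using False assms by (simp add: nth_append abs_minus_commute)
qed


lemma gapR: assumes gap: "\<forall>i<n. a (Suc i) - a i \<ge> 2*b + 2*\<epsilon>"
  shows "k + d \<le> n \<Longrightarrow> a (k + d) - a k \<ge> (2*b + 2*\<epsilon>) * real d"
proof (induction d)
  case 0 then show ?case by simp
next
  case (Suc d)
  have "a (Suc (k + d)) - a (k + d) \<ge> 2*b + 2*\<epsilon>" using gap Suc.prems by simp
  then show ?case using Suc by (simp add: algebra_simps)
qed

lemma cover_blocks:
  fixes xs :: "real list" and a :: "nat \<Rightarrow> real"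
  assumes len: "length xs = n" and eps: "\<epsilon> > 0" and gap: "\<forall>i<n. a (Suc i) - a i \<ge> 2*b + 2*\<epsilon>"
  shows "\<exists>k\<le>n. (\<forall>m<k. hi b (drop m (take k xs)) \<le> a k - \<epsilon>) \<and>
               (\<forall>L. 0 < L \<and> k + L \<le> n \<longrightarrow> a k + \<epsilon> \<le> lo b (take L (drop k xs)))"
proof -
  define S where "S i = sum_list (take i xs)" for i
  define c where "c j = a j + b + \<epsilon>" for j
  define A where "A i = (\<Sum>j<i. c j)" for i
  define F where "F i = S i - A i" for i
  have fin: "finite (F ` {..n})" "F ` {..n} \<noteq> {}" by auto
  have "Min (F ` {..n}) \<in> F ` {..n}" by (rule Min_in[OF fin])
  then obtain k where k0: "k \<in> {..n}" "Min (F ` {..n}) = F k" by blast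
  hence k: "k \<le> n" "F k = Min (F ` {..n})" by auto
  have kmin: "\<And>m. m \<le> n \<Longrightarrow> F k \<le> F m" using k(2) fin by simp
  have sR: "k + L \<le> n \<Longrightarrow> A (k + L) - A k \<ge> real L * a k + real L * real L * b + real L * \<epsilon>" for L
  proof (induction L)
    case 0 then show ?case by simp
  next
    case (Suc L)
    have IH: "A (k + L) - A k \<ge> real L * a k + real L * real L * b + real L * \<epsilon>" using Suc by simp
    have g: "a (k + L) - a k \<ge> (2*b + 2*\<epsilon>) * real L" using gapR[OF gap, of k L] Suc.prems by simp
    have "A (k + Suc L) = A (k + L) + c (k + L)" unfolding A_def by simp
    moreover have "real L * \<epsilon> \<ge> 0" using eps by simp
    ultimately show ?case using IH g unfolding c_def by (simp add: algebra_simps)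
  qed
  have sL: "L \<le> k \<Longrightarrow> A k - A (k - L) \<le> real L * a k - real L * real L * b - real L * \<epsilon>" for L
  proof (induction L)
    case 0 then show ?case by simp
  next
    case (Suc L)
    have IH: "A k - A (k - L) \<le> real L * a k - real L * real L * b - real L * \<epsilon>" using Suc by simp
    have g: "a (k - Suc L + Suc L) - a (k - Suc L) \<ge> (2*b + 2*\<epsilon>) * real (Suc L)"
      using gapR[OF gap, of "k - Suc L" "Suc L"] Suc.prems k(1) by simp
    have kk: "k - Suc L + Suc L = k" using Suc.prems by simp
    have "k - L = Suc (k - Suc L)" using Suc.prems by simp
    hence h1: "A (k - L) = A (k - Suc L) + c (k - Suc L)" unfolding A_def by simp
    define X where "X = real L"
    have X0: "X * \<epsilon> \<ge> 0" using eps unfolding X_def by simp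
    have g2: "a (k - Suc L) \<le> a k - (2*b*X + 2*b + 2*\<epsilon>*X + 2*\<epsilon>)" using g unfolding kk X_def
      by (simp add: algebra_simps)
    have IH2: "A k - A (k - L) \<le> X * a k - X * X * b - X * \<epsilon>" using IH unfolding X_def .
    have "A k - A (k - Suc L) = (A k - A (k - L)) + (a (k - Suc L) + b + \<epsilon>)" using h1 unfolding c_def by simp
    also have "\<dots> \<le> X * a k - X * X * b - X * \<epsilon> + a k - (2*b*X + 2*b + 2*\<epsilon>*X + 2*\<epsilon>) + b + \<epsilon>"
      using IH2 g2 by linarith
    also have "\<dots> \<le> (X + 1) * a k - (X + 1) * (X + 1) * b - (X + 1) * \<epsilon>"
      using X0 by (simp add: algebra_simps)
    finally show ?case unfolding X_def by (simp add: add.commute)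
  qed
  have "(\<forall>m<k. hi b (drop m (take k xs)) \<le> a k - \<epsilon>)"
  proof (intro allI impI)
    fix m assume m: "m < k"
    define L where "L = k - m"
    have L: "m = k - L" "L \<le> k" "L > 0" unfolding L_def using m by auto
    define B where "B = drop m (take k xs)"
    have "take k xs = take m xs @ B" unfolding B_def using m by (metis append_take_drop_id min.strict_order_iff take_take)
    hence sB: "sum_list B = S k - S m" unfolding S_def by simp
    have lB: "length B = L" unfolding B_def L_def using m k(1) len by simp
    have "F k \<le> F m" using kmin m k(1) by simp
    hence "S k - S m \<le> A k - A m" unfolding F_def by simp
    also have "\<dots> \<le> real L * a k - real L * real L * b - real L * \<epsilon>" using sL[of L] L by simp
    finally have "S k - S m \<le> real L * (a k - real L * b - \<epsilon>)" by (simp add: algebra_simps)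
    hence "(S k - S m) / real L \<le> a k - real L * b - \<epsilon>" using L(3) by (simp add: pos_divide_le_eq mult.commute)
    thus "hi b (drop m (take k xs)) \<le> a k - \<epsilon>" unfolding B_def[symmetric] hi_def cen_def sB lB by simp
  qed
  moreover have "(\<forall>L. 0 < L \<and> k + L \<le> n \<longrightarrow> a k + \<epsilon> \<le> lo b (take L (drop k xs)))"
  proof (intro allI impI)
    fix L assume L: "0 < L \<and> k + L \<le> n"
    define B where "B = take L (drop k xs)"
    have "take (k + L) xs = take k xs @ B" unfolding B_def by (simp add: take_add)
    hence sB: "sum_list B = S (k + L) - S k" unfolding S_def by simp
    have lB: "length B = L" unfolding B_def using L len by (simp add: min_def) linarith
    have "F k \<le> F (k + L)" using kmin L by simp
    hence "A (k + L) - A k \<le> S (k + L) - S k" unfolding F_def by simp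
    moreover have "A (k + L) - A k \<ge> real L * a k + real L * real L * b + real L * \<epsilon>" using sR L by simp
    ultimately have "real L * (a k + real L * b + \<epsilon>) \<le> S (k + L) - S k" by (simp add: algebra_simps)
    hence "a k + real L * b + \<epsilon> \<le> (S (k + L) - S k) / real L" using L by (simp add: pos_le_divide_eq mult.commute)
    thus "a k + \<epsilon> \<le> lo b (take L (drop k xs))" unfolding B_def[symmetric] lo_def cen_def sB lB by simp
  qed
  ultimately show ?thesis using k(1) by blast
qed


definition cnt :: "real \<Rightarrow> real list \<Rightarrow> nat" where
  "cnt t xs = card {i. i < length xs \<and> xs ! i \<le> t}"

lemma cnt_sort: "cnt t (sort xs) = cnt t xs"
proof -
  have "length (filter (\<lambda>v. v \<le> t) (sort xs)) = length (filter (\<lambda>v. v \<le> t) xs)"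
    by (metis mset_filter mset_sort size_mset)
  thus ?thesis unfolding cnt_def length_filter_conv_card by simp
qed

lemma cnt_ge: assumes "sorted s" "j < length s" "s ! j \<le> t" shows "j < cnt t s"
proof -
  have "{0..j} \<subseteq> {i. i < length s \<and> s ! i \<le> t}"
  proof
    fix i assume "i \<in> {0..j}"
    hence "i \<le> j" by simp
    hence "s ! i \<le> s ! j" using assms(1,2) by (simp add: sorted_nth_mono)
    thus "i \<in> {i. i < length s \<and> s ! i \<le> t}" using assms \<open>i \<le> j\<close> by auto
  qed
  hence "card {0..j} \<le> cnt t s" unfolding cnt_def by (intro card_mono) auto
  thus ?thesis by simp
qed

lemma cnt_le: assumes "sorted s" "j < length s" "t < s ! j" shows "cnt t s \<le> j"
proof -
  have "{i. i < length s \<and> s ! i \<le> t} \<subseteq> {..<j}"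
  proof
    fix i assume i: "i \<in> {i. i < length s \<and> s ! i \<le> t}"
    show "i \<in> {..<j}"
    proof (rule ccontr)
      assume "i \<notin> {..<j}"
      hence "j \<le> i" by simp
      hence "s ! j \<le> s ! i" using assms(1) i by (simp add: sorted_nth_mono)
      thus False using i assms(3) by simp
    qed
  qed
  hence "cnt t s \<le> card {..<j}" unfolding cnt_def by (intro card_mono) auto
  thus ?thesis by simp
qed

lemma cnt_mono: assumes "length xs = length ys" "\<forall>i<length xs. ys ! i \<le> xs ! i + e"
  shows "cnt t xs \<le> cnt (t + e) ys"
  unfolding cnt_def using assms by (intro card_mono) fastforce+

lemma sort_lip1: fixes xs ys :: "real list" assumes "length xs = length ys" "\<forall>i<length xs. ys ! i \<le> xs ! i + e" "j < length xs"
  shows "sort ys ! j \<le> sort xs ! j + e"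
proof (rule ccontr)
  assume "\<not> ?thesis"
  hence a: "sort xs ! j + e < sort ys ! j" by simp
  have "j < cnt (sort xs ! j) (sort xs)" using cnt_ge[of "sort xs" j] assms(3) by simp
  also have "\<dots> = cnt (sort xs ! j) xs" by (rule cnt_sort)
  also have "\<dots> \<le> cnt (sort xs ! j + e) ys" by (rule cnt_mono[OF assms(1,2)])
  also have "\<dots> = cnt (sort xs ! j + e) (sort ys)" by (rule cnt_sort[symmetric])
  also have "\<dots> \<le> j" using cnt_le[of "sort ys" j] a assms by simp
  finally show False by simp
qed

lemma sort_lip: fixes xs ys :: "real list" assumes "length xs = length ys" "\<forall>i<length xs. \<bar>xs ! i - ys ! i\<bar> \<le> e" "j < length xs"
  shows "\<bar>sort xs ! j - sort ys ! j\<bar> \<le> e"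
proof -
  have "sort ys ! j \<le> sort xs ! j + e" using sort_lip1[of xs ys e j] assms by fastforce
  moreover have "sort xs ! j \<le> sort ys ! j + e" using sort_lip1[of ys xs e j] assms by fastforce
  ultimately show ?thesis by linarith
qed

definition lip1 :: "nat \<Rightarrow> (real list \<Rightarrow> real) \<Rightarrow> bool" where
  "lip1 n F \<longleftrightarrow> (\<forall>xs ys e. 0 \<le> e \<and> length xs = n \<and> length ys = n \<and> (\<forall>i<n. \<bar>xs ! i - ys ! i\<bar> \<le> e) \<longrightarrow> F xs \<le> F ys + e)"

lemma sym_open_lip: assumes "lip1 n F"
  shows "sym_open n {z. size z = n \<and> F (sorted_list_of_multiset z) < 0}"
proof -
  define S where "S = {x :: nat \<Rightarrow> real. \<forall>i\<ge>n. x i = 0}"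
  define V where "V = {x :: nat \<Rightarrow> real. F (sort (map x [0..<n])) < 0}"
  have pre: "{x. (\<forall>i\<ge>n. x i = 0) \<and> mset (map x [0..<n]) \<in> {z. size z = n \<and> F (sorted_list_of_multiset z) < 0}}
     = S \<inter> V" unfolding S_def V_def by (auto simp del: mset_map mset_upt)
  have "open V" unfolding open_subopen[of V]
  proof
    fix x assume "x \<in> V"
    hence Fx: "F (sort (map x [0..<n])) < 0" unfolding V_def by simp
    define r where "r = - F (sort (map x [0..<n])) / 2"
    have r: "r > 0" using Fx unfolding r_def by simp
    define T where "T = (\<Inter>i\<in>{..<n}. {y :: nat \<Rightarrow> real. \<bar>y i - x i\<bar> < r})"
    have "open T" unfolding T_def
      by (intro open_INT finite_lessThan ballI open_Collect_less continuous_intros) auto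
    moreover have "x \<in> T" unfolding T_def using r by simp
    moreover have "T \<subseteq> V"
    proof
      fix y assume "y \<in> T"
      hence yi: "\<forall>i<n. \<bar>y i - x i\<bar> < r" unfolding T_def by simp
      have "\<forall>j<n. \<bar>sort (map y [0..<n]) ! j - sort (map x [0..<n]) ! j\<bar> \<le> r"
        using sort_lip[of "map y [0..<n]" "map x [0..<n]" r] yi by (simp add: less_imp_le)
      hence "F (sort (map y [0..<n])) \<le> F (sort (map x [0..<n])) + r"
        using assms r unfolding lip1_def by simp
      thus "y \<in> V" unfolding V_def r_def using Fx by simp
    qed
    ultimately show "\<exists>T. open T \<and> x \<in> T \<and> T \<subseteq> V" by blast
  qed
  hence "openin (top_of_set S) (S \<inter> V)" by (rule openin_open_Int)
  thus ?thesis unfolding sym_open_def pre[unfolded S_def] S_def by auto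
qed


lemma bump_cont: assumes "smooth_bump \<theta>" shows "continuous_on UNIV \<theta>"
proof -
  have "\<forall>x. \<theta> differentiable (at x)" using assms unfolding smooth_bump_def
    by (metis funpow_0)
  thus ?thesis by (simp add: continuous_at_imp_continuous_on differentiable_imp_continuous_within)
qed

lemma bump_nonneg: "smooth_bump \<theta> \<Longrightarrow> 0 \<le> \<theta> h"
  unfolding smooth_bump_def by blast
lemma bump_supp: "smooth_bump \<theta> \<Longrightarrow> \<bar>h\<bar> > 1 \<Longrightarrow> \<theta> h = 0"
  unfolding smooth_bump_def by blast

lemma bump_meas: "smooth_bump \<theta> \<Longrightarrow> \<theta> \<in> borel_measurable borel"
  by (rule borel_measurable_continuous_onI[OF bump_cont])

lemma kern1: assumes sb: "smooth_bump \<theta>" and d: "\<delta> > 0"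
  shows "integrable lborel (\<lambda>x. \<theta> (x / \<delta>) / \<delta>) \<and> (\<integral>x. \<theta> (x / \<delta>) / \<delta> \<partial>lborel) = 1"
proof -
  have m[measurable]: "\<theta> \<in> borel_measurable borel" by (rule bump_meas[OF sb])
  have nonneg: "\<And>x. 0 \<le> \<theta> x" and hi: "(\<theta> has_integral 1) UNIV" using sb unfolding smooth_bump_def by blast+
  have nn: "(\<integral>\<^sup>+x. ennreal (\<theta> x) \<partial>lborel) = 1"
    using nn_integral_has_integral_lborel[OF m nonneg hi] by simp
  have it: "integrable lborel \<theta>" by (rule integrableI_nonneg) (use nn nonneg in auto)
  have i1: "(\<integral>x. \<theta> x \<partial>lborel) = 1" using integral_eq_nn_integral[of \<theta> lborel] nn nonneg by simp
  have c: "1 / \<delta> \<noteq> 0" using d by simp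
  have it2: "integrable lborel (\<lambda>x. \<theta> (0 + (1/\<delta>) * x))" by (rule lborel_integrable_real_affine[OF it c])
  have "(\<integral>x. \<theta> x \<partial>lborel) = \<bar>1/\<delta>\<bar> *\<^sub>R (\<integral>x. \<theta> (0 + (1/\<delta>) * x) \<partial>lborel)"
    by (rule lborel_integral_real_affine[OF c])
  hence e: "(\<integral>x. \<theta> (x / \<delta>) \<partial>lborel) = \<delta>" using i1 d by (simp add: field_simps)
  have "integrable lborel (\<lambda>x. \<theta> (x / \<delta>))" using it2 by simp
  thus ?thesis using e d by simp
qed

definition kern :: "(real \<Rightarrow> real) \<Rightarrow> real \<Rightarrow> nat \<Rightarrow> (nat \<Rightarrow> real) \<Rightarrow> real" where
  "kern \<theta> \<delta> p h = (\<Prod>j<p. \<theta> (h j / \<delta>) / \<delta>)"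

lemma kernPi: assumes sb: "smooth_bump \<theta>" and d: "\<delta> > 0"
  shows "integrable (Pi\<^sub>M {..<p} (\<lambda>_. lborel)) (kern \<theta> \<delta> p) \<and> integral\<^sup>L (Pi\<^sub>M {..<p} (\<lambda>_. lborel)) (kern \<theta> \<delta> p) = 1"
proof -
  interpret product_sigma_finite "\<lambda>_. lborel" by standard
  have k: "integrable lborel (\<lambda>x. \<theta> (x / \<delta>) / \<delta>)" "(\<integral>x. \<theta> (x / \<delta>) / \<delta> \<partial>lborel) = 1"
    using kern1[OF sb d] by auto
  have "integrable (Pi\<^sub>M {..<p} (\<lambda>_. lborel)) (\<lambda>h. \<Prod>j\<in>{..<p}. (\<lambda>x. \<theta> (x / \<delta>) / \<delta>) (h j))"
    by (rule product_integrable_prod) (use k in auto)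
  moreover have "integral\<^sup>L (Pi\<^sub>M {..<p} (\<lambda>_. lborel)) (\<lambda>h. \<Prod>j\<in>{..<p}. (\<lambda>x. \<theta> (x / \<delta>) / \<delta>) (h j))
     = (\<Prod>j\<in>{..<p}. integral\<^sup>L lborel (\<lambda>x. \<theta> (x / \<delta>) / \<delta>))"
    by (rule product_integral_prod) (use k in auto)
  ultimately show ?thesis unfolding kern_def using k by simp
qed

lemma kern_nonneg: assumes "smooth_bump \<theta>" "\<delta> > 0" shows "0 \<le> kern \<theta> \<delta> p h"
proof -
  have nn: "\<And>x. 0 \<le> \<theta> x" using bump_nonneg assms(1) by blast
  show ?thesis unfolding kern_def
    by (intro prod_nonneg ballI divide_nonneg_pos nn) (use assms(2) in simp)
qed

lemma kern_supp: assumes "smooth_bump \<theta>" "\<delta> > 0" "kern \<theta> \<delta> p h \<noteq> 0" "j < p" shows "\<bar>h j\<bar> \<le> \<delta>"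
proof (rule ccontr)
  assume "\<not> ?thesis"
  hence "\<delta> < \<bar>h j\<bar>" by simp
  hence "1 < \<bar>h j\<bar> / \<delta>" using assms(2) by (simp add: less_divide_eq)
  hence "1 < \<bar>h j / \<delta>\<bar>" using assms(2) by simp
  hence z: "\<theta> (h j / \<delta>) = 0" using assms(1) bump_supp by blast
  have "kern \<theta> \<delta> p h = 0" unfolding kern_def
  proof (rule prod_zero)
    show "finite {..<p}" by simp
    show "\<exists>a\<in>{..<p}. \<theta> (h a / \<delta>) / \<delta> = 0" using z assms(4) by force
  qed
  thus False using assms(3) by simp
qed

definition gmax :: "real list \<Rightarrow> (nat \<Rightarrow> real) \<Rightarrow> real" where
  "gmax ts h = Max ((\<lambda>j. ts ! j + h j) ` {..<length ts})"

lemma reg_max_eq: "reg_max \<theta> \<delta> ts = integral\<^sup>L (Pi\<^sub>M {..<length ts} (\<lambda>_. lborel)) (\<lambda>h. gmax ts h * kern \<theta> \<delta> (length ts) h)"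
  unfolding reg_max_def gmax_def kern_def by simp

lemma gmax_meas: "gmax ts \<in> borel_measurable (Pi\<^sub>M {..<length ts} (\<lambda>_. lborel))"
  unfolding gmax_def by measurable

lemma gmax_bound: assumes "ts \<noteq> []" "\<forall>j<length ts. ts ! j \<le> c" "\<forall>j<length ts. h j \<le> d"
  shows "gmax ts h \<le> c + d"
  unfolding gmax_def using assms by (subst Max_le_iff) (auto intro: add_mono)

lemma gmax_abs: assumes "ts \<noteq> []" "\<forall>j<length ts. \<bar>ts ! j\<bar> \<le> c" "\<forall>j<length ts. \<bar>h j\<bar> \<le> d"
  shows "\<bar>gmax ts h\<bar> \<le> c + d"
proof -
  have "gmax ts h \<in> (\<lambda>j. ts ! j + h j) ` {..<length ts}" unfolding gmax_def
    using assms(1) by (intro Max_in) auto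
  then obtain j where "j < length ts" "gmax ts h = ts ! j + h j" by auto
  hence "\<bar>gmax ts h\<bar> \<le> \<bar>ts ! j\<bar> + \<bar>h j\<bar>" by (simp add: abs_triangle_ineq)
  thus ?thesis using assms(2,3) \<open>j < length ts\<close> by fastforce
qed

lemma gmax_lip: assumes "ts \<noteq> []" "length ts' = length ts" "\<forall>j<length ts. ts ! j \<le> ts' ! j + e"
  shows "gmax ts h \<le> gmax ts' h + e"
proof -
  have "\<forall>j<length ts. ts' ! j + h j \<le> gmax ts' h" unfolding gmax_def using assms(2) by (auto intro: Max_ge)
  hence h: "\<forall>j<length ts. ts' ! j + h j \<le> Max ((\<lambda>j. ts' ! j + h j) ` {..<length ts'})" unfolding gmax_def .
  show ?thesis unfolding gmax_def
  proof (rule Max.boundedI)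
    show "finite ((\<lambda>j. ts ! j + h j) ` {..<length ts})" by simp
    show "(\<lambda>j. ts ! j + h j) ` {..<length ts} \<noteq> {}" using assms(1) by (cases ts) auto
    fix a assume "a \<in> (\<lambda>j. ts ! j + h j) ` {..<length ts}"
    then obtain j where j: "j < length ts" "a = ts ! j + h j" by auto
    thus "a \<le> Max ((\<lambda>j. ts' ! j + h j) ` {..<length ts'}) + e" using h assms(3) by fastforce
  qed
qed

lemma integrand_int: assumes sb: "smooth_bump \<theta>" and d: "\<delta> > 0" and ne: "ts \<noteq> []"
  shows "integrable (Pi\<^sub>M {..<length ts} (\<lambda>_. lborel)) (\<lambda>h. gmax ts h * kern \<theta> \<delta> (length ts) h)"
proof -
  define C where "C = Max ((\<lambda>j. \<bar>ts ! j\<bar>) ` {..<length ts}) + \<delta>"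
  have Cj: "\<forall>j<length ts. \<bar>ts ! j\<bar> \<le> C - \<delta>" unfolding C_def by (auto intro: Max_ge)
  have ik: "integrable (Pi\<^sub>M {..<length ts} (\<lambda>_. lborel)) (kern \<theta> \<delta> (length ts))" using kernPi[OF sb d] by simp
  let ?M = "Pi\<^sub>M {..<length ts} (\<lambda>_. lborel)"
  let ?K = "kern \<theta> \<delta> (length ts)"
  have i0: "integrable ?M (\<lambda>h. C * ?K h)" using ik by (rule integrable_mult_right)
  have mK: "?K \<in> borel_measurable ?M" using ik by (rule borel_measurable_integrable)
  have m0: "(\<lambda>h. gmax ts h * ?K h) \<in> borel_measurable ?M"
    using gmax_meas mK by (rule borel_measurable_times)
  have ae: "AE h in ?M. norm (gmax ts h * ?K h) \<le> norm (C * ?K h)"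
  proof (intro AE_I2)
    fix h
    show "norm (gmax ts h * ?K h) \<le> norm (C * ?K h)"
    proof (cases "?K h = 0")
      case True then show ?thesis by simp
    next
      case False
      hence "\<forall>j<length ts. \<bar>h j\<bar> \<le> \<delta>" using kern_supp[OF sb d] by blast
      hence "\<bar>gmax ts h\<bar> \<le> C - \<delta> + \<delta>" using gmax_abs[OF ne Cj] by blast
      moreover have "0 \<le> ?K h" by (rule kern_nonneg[OF sb d])
      ultimately show ?thesis by (simp add: abs_mult mult_right_mono)
    qed
  qed
  show ?thesis by (rule Bochner_Integration.integrable_bound[OF i0 m0 ae])
qed

lemma reg_max_upper: assumes sb: "smooth_bump \<theta>" and d: "\<delta> > 0" and ne: "ts \<noteq> []"
  and c: "\<forall>j<length ts. ts ! j \<le> c"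
  shows "reg_max \<theta> \<delta> ts \<le> c + \<delta>"
proof -
  let ?M = "Pi\<^sub>M {..<length ts} (\<lambda>_. lborel)"
  let ?K = "kern \<theta> \<delta> (length ts)"
  have ik: "integrable ?M ?K" "integral\<^sup>L ?M ?K = 1" using kernPi[OF sb d] by auto
  have "reg_max \<theta> \<delta> ts \<le> integral\<^sup>L ?M (\<lambda>h. (c + \<delta>) * ?K h)"
    unfolding reg_max_eq
  proof (rule integral_mono)
    show "integrable ?M (\<lambda>h. gmax ts h * ?K h)" by (rule integrand_int[OF sb d ne])
    show "integrable ?M (\<lambda>h. (c + \<delta>) * ?K h)" using ik(1) by (rule integrable_mult_right)
    fix h
    show "gmax ts h * ?K h \<le> (c + \<delta>) * ?K h"
    proof (cases "?K h = 0")
      case True then show ?thesis by simp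
    next
      case False
      hence "\<forall>j<length ts. \<bar>h j\<bar> \<le> \<delta>" using kern_supp[OF sb d] by blast
      hence "gmax ts h \<le> c + \<delta>" using gmax_bound[OF ne c] by (meson abs_le_D1)
      thus ?thesis using kern_nonneg[OF sb d] by (simp add: mult_right_mono)
    qed
  qed
  also have "\<dots> = c + \<delta>" using ik by simp
  finally show ?thesis .
qed

lemma reg_max_lip: assumes sb: "smooth_bump \<theta>" and d: "\<delta> > 0" and ne: "ts \<noteq> []"
  and l: "length ts' = length ts" and e: "\<forall>j<length ts. ts ! j \<le> ts' ! j + e"
  shows "reg_max \<theta> \<delta> ts \<le> reg_max \<theta> \<delta> ts' + e"
proof -
  let ?M = "Pi\<^sub>M {..<length ts} (\<lambda>_. lborel)"
  let ?K = "kern \<theta> \<delta> (length ts)"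
  have ne': "ts' \<noteq> []" using ne l by auto
  have ik: "integrable ?M ?K" "integral\<^sup>L ?M ?K = 1" using kernPi[OF sb d] by auto
  have i1: "integrable ?M (\<lambda>h. gmax ts h * ?K h)" by (rule integrand_int[OF sb d ne])
  have i2: "integrable ?M (\<lambda>h. gmax ts' h * ?K h)" using integrand_int[OF sb d ne'] l by simp
  have iK: "integrable ?M (\<lambda>h. e * ?K h)" using ik(1) by (rule integrable_mult_right)
  have A: "reg_max \<theta> \<delta> ts \<le> integral\<^sup>L ?M (\<lambda>h. gmax ts' h * ?K h + e * ?K h)"
    unfolding reg_max_eq
  proof (rule integral_mono)
    show "integrable ?M (\<lambda>h. gmax ts h * ?K h)" by (rule i1)
    show "integrable ?M (\<lambda>h. gmax ts' h * ?K h + e * ?K h)" by (rule Bochner_Integration.integrable_add[OF i2 iK])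
    fix h
    have "gmax ts h \<le> gmax ts' h + e" by (rule gmax_lip[OF ne l e])
    hence "gmax ts h * ?K h \<le> (gmax ts' h + e) * ?K h"
      using kern_nonneg[OF sb d] by (rule mult_right_mono)
    thus "gmax ts h * ?K h \<le> gmax ts' h * ?K h + e * ?K h" by (simp add: distrib_right)
  qed
  have B: "integral\<^sup>L ?M (\<lambda>h. gmax ts' h * ?K h + e * ?K h) = integral\<^sup>L ?M (\<lambda>h. gmax ts' h * ?K h) + integral\<^sup>L ?M (\<lambda>h. e * ?K h)"
    by (rule Bochner_Integration.integral_add[OF i2 iK])
  have C: "integral\<^sup>L ?M (\<lambda>h. e * ?K h) = e" using ik by simp
  have D: "reg_max \<theta> \<delta> ts' = integral\<^sup>L ?M (\<lambda>h. gmax ts' h * ?K h)"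
    using reg_max_eq[of \<theta> \<delta> ts'] unfolding l .
  have "reg_max \<theta> \<delta> ts \<le> integral\<^sup>L ?M (\<lambda>h. gmax ts' h * ?K h) + e" using A unfolding B C .
  thus ?thesis unfolding D .
qed


fun mx :: "real list \<Rightarrow> real" where
  "mx [] = -1" | "mx (t # ts) = max t (mx ts)"

lemma mx_neg: "mx ts < 0 \<longleftrightarrow> (\<forall>j<length ts. ts ! j < 0)"
  by (induction ts) (auto simp: nth_Cons split: nat.splits)

lemma mx_lip: "length ts = length ts' \<Longrightarrow> 0 \<le> e \<Longrightarrow> \<forall>j<length ts. ts ! j \<le> ts' ! j + e \<Longrightarrow> mx ts \<le> mx ts' + e"
proof (induction ts arbitrary: ts')
  case Nil then show ?case by simp
next
  case (Cons t ts)
  then obtain t' ts'' where ts': "ts' = t' # ts''" by (cases ts') auto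
  have "t \<le> t' + e" using Cons.prems ts' by force
  moreover have "mx ts \<le> mx ts'' + e" using Cons.IH[of ts''] Cons.prems ts' by force
  ultimately show ?case unfolding ts' mx.simps
    by (intro max.boundedI) (simp_all add: le_max_iff_disj)
qed

lemma TS_lip1: assumes "length xs = n" "length ys = n" "k \<le> n" "\<forall>i<n. \<bar>xs ! i - ys ! i\<bar> \<le> e" "j < n"
  shows "TS b a n k xs ! j \<le> TS b a n k ys ! j + e"
  using TS_lip[OF assms, of b a] by linarith

lemma open_disc: assumes b: "b > 0" and k: "k \<le> n" shows "sym_open n (U_set b a n k)"
proof -
  have key: "cond b (sorted_list_of_multiset z) k (a k) \<longleftrightarrow> mx (TS b a n k (sorted_list_of_multiset z)) < 0"
    if sz: "size z = n" for z :: "real multiset"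
  proof -
    have len: "length (sorted_list_of_multiset z) = n" using sz by (metis mset_sorted_list_of_multiset size_mset)
    have "cond b (sorted_list_of_multiset z) k (a k) \<longleftrightarrow> (\<forall>j<n. TS b a n k (sorted_list_of_multiset z) ! j < 0)"
      by (rule cond_TS[OF len k])
    also have "\<dots> \<longleftrightarrow> mx (TS b a n k (sorted_list_of_multiset z)) < 0" using mx_neg length_TS[OF k] by metis
    finally show ?thesis .
  qed
  have eq: "U_set b a n k = {z. size z = n \<and> mx (TS b a n k (sorted_list_of_multiset z)) < 0}"
    unfolding U_set_char[OF b] using key by blast
  have "lip1 n (\<lambda>xs. mx (TS b a n k xs))" unfolding lip1_def
  proof (intro allI impI)
    fix xs ys :: "real list" and e :: real
    assume H: "0 \<le> e \<and> length xs = n \<and> length ys = n \<and> (\<forall>i<n. \<bar>xs ! i - ys ! i\<bar> \<le> e)"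
    show "mx (TS b a n k xs) \<le> mx (TS b a n k ys) + e"
    proof (rule mx_lip)
      show "length (TS b a n k xs) = length (TS b a n k ys)" using length_TS[OF k] by simp
      show "0 \<le> e" using H by simp
      show "\<forall>j<length (TS b a n k xs). TS b a n k xs ! j \<le> TS b a n k ys ! j + e"
      proof (intro allI impI)
        fix j assume "j < length (TS b a n k xs)"
        hence j: "j < n" using length_TS[OF k] by simp
        show "TS b a n k xs ! j \<le> TS b a n k ys ! j + e"
          by (rule TS_lip1) (use H k j in auto)
      qed
    qed
  qed
  thus ?thesis unfolding eq by (rule sym_open_lip)
qed

lemma TS_le: assumes len: "length xs = n" and k: "k \<le> n"
  and L: "\<forall>m<k. hi b (drop m (take k xs)) \<le> a k - \<epsilon>"
  and R: "\<forall>L. 0 < L \<and> k + L \<le> n \<longrightarrow> a k + \<epsilon> \<le> lo b (take L (drop k xs))"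
  shows "\<forall>j<n. TS b a n k xs ! j \<le> - \<epsilon>"
proof (intro allI impI)
  fix j assume j: "j < n"
  show "TS b a n k xs ! j \<le> - \<epsilon>"
  proof (cases "j < k")
    case True
    have "hi b (drop (k - Suc j) (take k xs)) \<le> a k - \<epsilon>" using L True by simp
    then show ?thesis using TS_left[OF len k True, of b a] by simp
  next
    case False
    have "a k + \<epsilon> \<le> lo b (take (j - k + 1) (drop k xs))" using R False j by simp
    then show ?thesis using TS_right[OF len _ j, of k b a] False by simp
  qed
qed

theorem lemma4p4:
  fixes b :: real and a :: "nat \<Rightarrow> real" and n :: nat and \<theta> :: "real \<Rightarrow> real"
  assumes "b > 0" and "-1 \<le> a 0" and "a n \<le> 1"
    and "\<forall>i<n. a i < a (Suc i)" and "\<forall>i<n. a (Suc i) - a i > 2 * b"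
  shows "(\<forall>i\<le>n. sym_open n (U_set b a n i)) \<and>
         (\<forall>z::real multiset. size z = n \<longrightarrow> (\<exists>i\<le>n. z \<in> U_set b a n i)) \<and>
         (smooth_bump \<theta> \<and> n \<ge> 1 \<longrightarrow>
         (\<exists>\<delta>\<^sub>0>0. \<forall>\<delta>. 0 < \<delta> \<and> \<delta> < \<delta>\<^sub>0 \<longrightarrow>
           (\<forall>k\<le>n. sym_open n (U_smooth \<theta> \<delta> b a n k)) \<and>
           (\<forall>z::real multiset. size z = n \<longrightarrow> (\<exists>k\<le>n. z \<in> U_smooth \<theta> \<delta> b a n k))))"
proof -
  define E where "E = insert 1 ((\<lambda>i. (a (Suc i) - a i - 2*b)/2) ` {..<n})"
  define \<epsilon> where "\<epsilon> = Min E"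
  have finE: "finite E" "E \<noteq> {}" unfolding E_def by auto
  have Epos: "\<forall>x\<in>E. x > 0" unfolding E_def using assms(5) by auto
  have epos: "\<epsilon> > 0" using Min_in[OF finE] Epos unfolding \<epsilon>_def by blast
  have gap: "\<forall>i<n. a (Suc i) - a i \<ge> 2*b + 2*\<epsilon>"
  proof (intro allI impI)
    fix i assume i: "i < n"
    have "(a (Suc i) - a i - 2*b)/2 \<in> E" unfolding E_def using i by auto
    hence "\<epsilon> \<le> (a (Suc i) - a i - 2*b)/2" unfolding \<epsilon>_def using finE by (meson Min_le)
    thus "a (Suc i) - a i \<ge> 2*b + 2*\<epsilon>" by simp
  qed
  have lenz: "length (sorted_list_of_multiset z) = size z" for z :: "real multiset"
    by (metis mset_sorted_list_of_multiset size_mset)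
  have P1: "\<forall>i\<le>n. sym_open n (U_set b a n i)" using open_disc assms(1) by blast
  have P2: "\<forall>z::real multiset. size z = n \<longrightarrow> (\<exists>i\<le>n. z \<in> U_set b a n i)"
  proof (intro allI impI)
    fix z :: "real multiset" assume sz: "size z = n"
    define xs where "xs = sorted_list_of_multiset z"
    have len: "length xs = n" unfolding xs_def using lenz sz by simp
    obtain k where k: "k \<le> n" "\<forall>m<k. hi b (drop m (take k xs)) \<le> a k - \<epsilon>"
      "\<forall>L. 0 < L \<and> k + L \<le> n \<longrightarrow> a k + \<epsilon> \<le> lo b (take L (drop k xs))"
      using cover_blocks[OF len epos gap] by blast
    have "cond b xs k (a k)" unfolding cond_def
    proof (intro conjI allI impI)
      show "k \<le> length xs" using k len by simp
      fix m assume "m < k" thus "hi b (drop m (take k xs)) < a k" using k(2) epos by fastforce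
    next
      fix L assume "0 < L \<and> k + L \<le> length xs" thus "a k < lo b (take L (drop k xs))" using k(3) epos len by fastforce
    qed
    hence "z \<in> U_set b a n k" unfolding U_set_char[OF assms(1)] using sz xs_def by simp
    thus "\<exists>i\<le>n. z \<in> U_set b a n i" using k(1) by blast
  qed
  have P3: "smooth_bump \<theta> \<and> n \<ge> 1 \<longrightarrow>
         (\<exists>\<delta>\<^sub>0>0. \<forall>\<delta>. 0 < \<delta> \<and> \<delta> < \<delta>\<^sub>0 \<longrightarrow>
           (\<forall>k\<le>n. sym_open n (U_smooth \<theta> \<delta> b a n k)) \<and>
           (\<forall>z::real multiset. size z = n \<longrightarrow> (\<exists>k\<le>n. z \<in> U_smooth \<theta> \<delta> b a n k)))"
  proof (intro impI)
    assume H: "smooth_bump \<theta> \<and> n \<ge> 1"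
    hence sb: "smooth_bump \<theta>" and n1: "n \<ge> 1" by auto
    have "\<forall>\<delta>. 0 < \<delta> \<and> \<delta> < \<epsilon> \<longrightarrow>
           (\<forall>k\<le>n. sym_open n (U_smooth \<theta> \<delta> b a n k)) \<and>
           (\<forall>z::real multiset. size z = n \<longrightarrow> (\<exists>k\<le>n. z \<in> U_smooth \<theta> \<delta> b a n k))"
    proof (intro allI impI)
      fix \<delta> assume dd: "0 < \<delta> \<and> \<delta> < \<epsilon>"
      hence d: "\<delta> > 0" by simp
      have A: "\<forall>k\<le>n. sym_open n (U_smooth \<theta> \<delta> b a n k)"
      proof (intro allI impI)
        fix k assume k: "k \<le> n"
        have eq: "U_smooth \<theta> \<delta> b a n k = {z. size z = n \<and> reg_max \<theta> \<delta> (TS b a n k (sorted_list_of_multiset z)) < 0}"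
          unfolding U_smooth_def rho_TS by simp
        have "lip1 n (\<lambda>xs. reg_max \<theta> \<delta> (TS b a n k xs))" unfolding lip1_def
        proof (intro allI impI)
          fix xs ys :: "real list" and e :: real
          assume H: "0 \<le> e \<and> length xs = n \<and> length ys = n \<and> (\<forall>i<n. \<bar>xs ! i - ys ! i\<bar> \<le> e)"
          show "reg_max \<theta> \<delta> (TS b a n k xs) \<le> reg_max \<theta> \<delta> (TS b a n k ys) + e"
          proof (rule reg_max_lip[OF sb d])
            show "TS b a n k xs \<noteq> []" using length_TS[OF k] n1 by (metis list.size(3) not_one_le_zero)
            show "length (TS b a n k ys) = length (TS b a n k xs)" using length_TS[OF k] by simp
            show "\<forall>j<length (TS b a n k xs). TS b a n k xs ! j \<le> TS b a n k ys ! j + e"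
            proof (intro allI impI)
              fix j assume "j < length (TS b a n k xs)"
              hence j: "j < n" using length_TS[OF k] by simp
              show "TS b a n k xs ! j \<le> TS b a n k ys ! j + e"
                by (rule TS_lip1) (use H k j in auto)
            qed
          qed
        qed
        thus "sym_open n (U_smooth \<theta> \<delta> b a n k)" unfolding eq by (rule sym_open_lip)
      qed
      have B: "\<forall>z::real multiset. size z = n \<longrightarrow> (\<exists>k\<le>n. z \<in> U_smooth \<theta> \<delta> b a n k)"
      proof (intro allI impI)
        fix z :: "real multiset" assume sz: "size z = n"
        define xs where "xs = sorted_list_of_multiset z"
        have len: "length xs = n" unfolding xs_def using lenz sz by simp
        obtain k where k: "k \<le> n" "\<forall>m<k. hi b (drop m (take k xs)) \<le> a k - \<epsilon>"
          "\<forall>L. 0 < L \<and> k + L \<le> n \<longrightarrow> a k + \<epsilon> \<le> lo b (take L (drop k xs))"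
          using cover_blocks[OF len epos gap] by blast
        have le: "\<forall>j<n. TS b a n k xs ! j \<le> - \<epsilon>" using TS_le[of xs n k b a \<epsilon>] len k by blast
        have ne: "TS b a n k xs \<noteq> []" using length_TS[OF k(1)] n1 by (metis list.size(3) not_one_le_zero)
        have "reg_max \<theta> \<delta> (TS b a n k xs) \<le> - \<epsilon> + \<delta>"
          by (rule reg_max_upper[OF sb d ne]) (use le length_TS[OF k(1)] in simp)
        hence "reg_max \<theta> \<delta> (TS b a n k xs) < 0" using dd by simp
        hence "z \<in> U_smooth \<theta> \<delta> b a n k" unfolding U_smooth_def rho_TS using sz xs_def by simp
        thus "\<exists>k\<le>n. z \<in> U_smooth \<theta> \<delta> b a n k" using k(1) by blast
      qed
      show "(\<forall>k\<le>n. sym_open n (U_smooth \<theta> \<delta> b a n k)) \<and>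
           (\<forall>z::real multiset. size z = n \<longrightarrow> (\<exists>k\<le>n. z \<in> U_smooth \<theta> \<delta> b a n k))" using A B by blast
    qed
    thus "\<exists>\<delta>\<^sub>0>0. \<forall>\<delta>. 0 < \<delta> \<and> \<delta> < \<delta>\<^sub>0 \<longrightarrow>
           (\<forall>k\<le>n. sym_open n (U_smooth \<theta> \<delta> b a n k)) \<and>
           (\<forall>z::real multiset. size z = n \<longrightarrow> (\<exists>k\<le>n. z \<in> U_smooth \<theta> \<delta> b a n k))"
      using epos by blast
  qed
  show ?thesis using P1 P2 P3 by blast
qed


end
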